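(* Let $Q\in\mathbb{N}$ and let $c_{\mathrm m},c_{\mathrm s},c_{\mathrm r}>0$. Consider the distributed computing problem described in the context, in the sequential implementation, with $N$ sufficiently large. Define \[ r^*=\max\ \underset{r\in\{0,1,\ldots,Q\}}{\operatorname{argmin}}\ \Big( c_{\mathrm m}\frac{r}{Q}+c_{\mathrm s}\frac{Q-r}{Q(r+1)}\Big). \] Then the minimum execution time is \[ T^*_{\mathrm{sequential}}=c_{\mathrm m}\frac{r^*}{Q}+c_{\mathrm s}\frac{Q-r^*}{Q(r^*+1)}+c_{\mathrm r}. \] Moreover, $T^*_{\mathrm{sequential}}$ can be exactly achieved using a finite number of servers if and only if $r^*\neq 0$, and for $r^*\neq 0$ the minimum number of servers needed to achieve it is \[ K^*_{\mathrm{sequential}}=\begin{cases} Q+\lceil Q/r^*\rceil, & 0<r^*<Q,\\ Q, & r^*=Q.\end{cases} \]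
   Context: Problem: given $N$ input files $w_1,\ldots,w_N\in\mathbb{F}_{2^F}$, compute $Q$ output functions $\phi_q(w_1,\ldots,w_N)=h_q(g_{q,1}(w_1),\ldots,g_{q,N}(w_N))\in\mathbb{F}_{2^B}$, $q\in\{1,\ldots,Q\}$, where the Map function $\vec g_n=(g_{1,n},\ldots,g_{Q,n})$ maps file $w_n$ to $Q$ intermediate values $v_{q,n}=g_{q,n}(w_n)\in\mathbb{F}_{2^T}$, and the Reduce function $h_q$ maps $(v_{q,1},\ldots,v_{q,N})$ to $u_q=\phi_q(w_1,\ldots,w_N)$. A computing scheme chooses a number of servers $K\in\mathbb{N}$, a Map assignment $\boldsymbol{\mathcal M}=(\mathcal M_1,\ldots,\mathcal M_K)$ with $\mathcal M_k\subseteq\{1,\ldots,N\}$ and $\bigcup_k\mathcal M_k=\{1,\ldots,N\}$ (server $k$ computes $\vec g_n(w_n)$ for $n\in\mathcal M_k$), a Reduce assignment $\boldsymbol{\mathcal W}=(\mathcal W_1,\ldots,\mathcal W_K)$, a partition of $\{1,\ldots,Q\}$ into pairwise disjoint (possibly empty) sets (server $k$ must compute $u_q$ for $q\in\mathcal W_k$), and a shuffling scheme: each server $k$ creates a message $X_k=\psi_k(\{\vec g_n:n\in\mathcal M_k\})$ and multicasts it to a subset of the other servers (multicasting costs the same as unicasting). The shuffling scheme is valid if, for every possible realization of the intermediate values, each server $k$ can decode all $v_{q,n}$ with $q\in\mathcal W_k$ from its locally computed values and the received messages. Peak computation load $p=\max_k|\mathcal M_k|/N$; communication load $L$ = total number of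 bits sent by all servers divided by $QNT$. Map time $T_{\mathrm{map}}=c_{\mathrm m}p$, Shuffle time $T_{\mathrm{shuffle}}=c_{\mathrm s}L$, Reduce time $T_{\mathrm{reduce}}=c_{\mathrm r}\max_k|\mathcal W_k|$. Sequential implementation: execution time $T_{\mathrm{sequential}}=T_{\mathrm{map}}+T_{\mathrm{shuffle}}+T_{\mathrm{reduce}}$. For given $K,\boldsymbol{\mathcal M},\boldsymbol{\mathcal W}$, $T^*_{\mathrm{sequential}}(K,\boldsymbol{\mathcal M},\boldsymbol{\mathcal W})$ is the execution time when a valid shuffling scheme of minimum shuffle time is used; $T^*_{\mathrm{sequential}}=\inf_{K,\boldsymbol{\mathcal M},\boldsymbol{\mathcal W}}T^*_{\mathrm{sequential}}(K,\boldsymbol{\mathcal M},\boldsymbol{\mathcal W})$, with $N$ assumed large (the paper works in the regime of large $N$, so that files can be partitioned evenly as needed). $K^*_{\mathrm{sequential}}=\min\{K\in\mathbb{N}:\min_{\boldsymbol{\mathcal M},\boldsymbol{\mathcal W}}T^*_{\mathrm{sequential}}(K,\boldsymbol{\mathcal M},\boldsymbol{\mathcal W})=T^*_{\mathrm{sequential}}\}$; $T^*_{\mathrm{sequential}}$ is said to be achievable with a finite number of servers if this minimum exists. *)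

theory Defs
  imports Complex_Main
begin

text \<open>Indexing conventions: output functions q are 0..Q-1, files n are 0..N-1,
servers k are 0..K-1.  An intermediate value v q n is a bit string of length T
(an element of the field with 2^T elements, viewed as T bits).\<close>

type_synonym ivals = "nat \<Rightarrow> nat \<Rightarrow> bool list"

definition realization :: "nat \<Rightarrow> nat \<Rightarrow> nat \<Rightarrow> ivals \<Rightarrow> bool" where
  "realization Q N T v \<longleftrightarrow> (\<forall>q<Q. \<forall>n<N. length (v q n) = T)"

definition assignment_ok ::
  "nat \<Rightarrow> nat \<Rightarrow> nat \<Rightarrow> (nat \<Rightarrow> nat set) \<Rightarrow> (nat \<Rightarrow> nat set) \<Rightarrow> bool" where
  "assignment_ok Q N K M W \<longleftrightarrow>
     (\<forall>k<K. M k \<subseteq> {..<N}) \<and> (\<Union>k<K. M k) = {..<N} \<and>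
     (\<forall>k<K. W k \<subseteq> {..<Q}) \<and> (\<Union>k<K. W k) = {..<Q} \<and>
     (\<forall>k<K. \<forall>j<K. k \<noteq> j \<longrightarrow> W k \<inter> W j = {})"

text \<open>A shuffling scheme: server k sends a message psi k v of l k bits, which
depends only on its locally mapped intermediate values, multicast to the set D k
of other servers.  Validity: for every realization, each server can decode
all v q n with q in W k from its local values and the messages it receives
(i.e. two realizations indistinguishable to server k agree on those values).\<close>
definition valid_shuffle ::
  "nat \<Rightarrow> nat \<Rightarrow> nat \<Rightarrow> nat \<Rightarrow> (nat \<Rightarrow> nat set) \<Rightarrow> (nat \<Rightarrow> nat set) \<Rightarrow>
   (nat \<Rightarrow> nat) \<Rightarrow> (nat \<Rightarrow> ivals \<Rightarrow> bool list) \<Rightarrow> (nat \<Rightarrow> nat set) \<Rightarrow> bool" where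
  "valid_shuffle Q N T K M W l psi D \<longleftrightarrow>
     (\<forall>k<K. D k \<subseteq> {..<K} - {k}) \<and>
     (\<forall>k<K. \<forall>v. realization Q N T v \<longrightarrow> length (psi k v) = l k) \<and>
     (\<forall>k<K. \<forall>v v'. realization Q N T v \<longrightarrow> realization Q N T v' \<longrightarrow>
        (\<forall>q<Q. \<forall>n\<in>M k. v q n = v' q n) \<longrightarrow> psi k v = psi k v') \<and>
     (\<forall>k<K. \<forall>v v'. realization Q N T v \<longrightarrow> realization Q N T v' \<longrightarrow>
        (\<forall>q<Q. \<forall>n\<in>M k. v q n = v' q n) \<longrightarrow>
        (\<forall>j<K. k \<in> D j \<longrightarrow> psi j v = psi j v') \<longrightarrow>
        (\<forall>q\<in>W k. \<forall>n<N. v q n = v' q n))"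

definition min_load ::
  "nat \<Rightarrow> nat \<Rightarrow> nat \<Rightarrow> nat \<Rightarrow> (nat \<Rightarrow> nat set) \<Rightarrow> (nat \<Rightarrow> nat set) \<Rightarrow> real" where
  "min_load Q N T K M W =
     Inf {real (\<Sum>k<K. l k) / real (Q * N * T) | l psi D. valid_shuffle Q N T K M W l psi D}"

definition T_seq ::
  "real \<Rightarrow> real \<Rightarrow> real \<Rightarrow> nat \<Rightarrow> nat \<Rightarrow> nat \<Rightarrow> nat \<Rightarrow>
   (nat \<Rightarrow> nat set) \<Rightarrow> (nat \<Rightarrow> nat set) \<Rightarrow> real" where
  "T_seq cm cs cr Q T N K M W =
     cm * (real (Max ((\<lambda>k. card (M k)) ` {..<K})) / real N)
     + cs * min_load Q N T K M W
     + cr * real (Max ((\<lambda>k. card (W k)) ` {..<K}))"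

text \<open>Optimal execution time: infimum over the number of files N (large N regime),
the number of servers K and the Map/Reduce assignments.\<close>
definition T_seq_opt :: "real \<Rightarrow> real \<Rightarrow> real \<Rightarrow> nat \<Rightarrow> nat \<Rightarrow> real" where
  "T_seq_opt cm cs cr Q T =
     Inf {T_seq cm cs cr Q T N K M W | N K M W. N \<ge> 1 \<and> assignment_ok Q N K M W}"

definition achieves_opt :: "real \<Rightarrow> real \<Rightarrow> real \<Rightarrow> nat \<Rightarrow> nat \<Rightarrow> nat \<Rightarrow> bool" where
  "achieves_opt cm cs cr Q T K \<longleftrightarrow>
     (\<exists>N M W. N \<ge> 1 \<and> assignment_ok Q N K M W \<and>
        T_seq cm cs cr Q T N K M W = T_seq_opt cm cs cr Q T)"

definition cost_r :: "real \<Rightarrow> real \<Rightarrow> nat \<Rightarrow> nat \<Rightarrow> real" where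
  "cost_r cm cs Q r = cm * real r / real Q + cs * (real Q - real r) / (real Q * (real r + 1))"

definition r_star :: "real \<Rightarrow> real \<Rightarrow> nat \<Rightarrow> nat" where
  "r_star cm cs Q = Max {r \<in> {0..Q}. \<forall>r'\<in>{0..Q}. cost_r cm cs Q r \<le> cost_r cm cs Q r'}"

end

theory Submission
  imports Defs "HOL-Library.FuncSet"
begin

definition agree :: "(nat \<times> nat) set \<Rightarrow> ivals \<Rightarrow> ivals \<Rightarrow> bool" where
  "agree F v w \<longleftrightarrow> (\<forall>q n. (q, n) \<in> F \<longrightarrow> v q n = w q n)"

definition Loc :: "nat \<Rightarrow> (nat \<Rightarrow> nat set) \<Rightarrow> nat \<Rightarrow> (nat \<times> nat) set" where
  "Loc Q M k = {(q, n). q < Q \<and> n \<in> M k}"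

lemma concat_eq_sameD:
  "concat xs = concat ys \<Longrightarrow> map length xs = map length ys \<Longrightarrow> xs = ys"
proof (induction xs arbitrary: ys)
  case Nil then show ?case by simp
next
  case (Cons x xs)
  then obtain y ys' where ys: "ys = y # ys'" by (cases ys) auto
  with Cons.prems have "length x = length y" "map length xs = map length ys'" by auto
  moreover have "x @ concat xs = y @ concat ys'" using Cons.prems ys by simp
  ultimately have "x = y" "concat xs = concat ys'" by (auto simp: append_eq_append_conv)
  then show ?case using Cons.IH \<open>map length xs = map length ys'\<close> ys by simp
qed

lemma card_bool_lists: "card {xs :: bool list. length xs = n} = 2 ^ n"
proof -
  have "card {xs :: bool list. set xs \<subseteq> UNIV \<and> length xs = n} = card (UNIV :: bool set) ^ n"
    by (rule card_lists_length_eq) simp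
  then show ?thesis by simp
qed

lemma finite_bool_lists: "finite {xs :: bool list. length xs = n}"
proof -
  have "finite {xs :: bool list. set xs \<subseteq> UNIV \<and> length xs = n}"
    by (rule finite_lists_length_eq) simp
  then show ?thesis by simp
qed

definition sigf :: "nat \<Rightarrow> (nat \<Rightarrow> nat set) \<Rightarrow> nat \<Rightarrow> nat" where
  "sigf K W q = (SOME k. k < K \<and> q \<in> W k)"

locale VS =
  fixes Q N T K :: nat and M W :: "nat \<Rightarrow> nat set" and l :: "nat \<Rightarrow> nat"
    and psi :: "nat \<Rightarrow> ivals \<Rightarrow> bool list" and D :: "nat \<Rightarrow> nat set"
  assumes vs: "valid_shuffle Q N T K M W l psi D" and ao: "assignment_ok Q N K M W"
begin

abbreviation sig :: "nat \<Rightarrow> nat" where "sig \<equiv> sigf K W"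

lemma sig: assumes "q < Q" shows "sig q < K" "q \<in> W (sig q)"
proof -
  have "q \<in> (\<Union>k<K. W k)" using ao assms unfolding assignment_ok_def by auto
  then have "\<exists>k. k < K \<and> q \<in> W k" by auto
  then show "sig q < K" "q \<in> W (sig q)" unfolding sigf_def by (metis (mono_tags, lifting) someI_ex)+
qed

lemma sig_unique: assumes "q < Q" "k < K" "q \<in> W k" shows "sig q = k"
  using ao sig[OF assms(1)] assms unfolding assignment_ok_def by blast

definition XS :: "nat set \<Rightarrow> ivals \<Rightarrow> nat \<Rightarrow> bool list" where
  "XS S v = restrict (\<lambda>j. psi j v) S"

definition CS :: "nat set \<Rightarrow> (nat \<times> nat) set \<Rightarrow> ivals \<Rightarrow> (nat \<Rightarrow> bool list) set" where
  "CS S F w = {XS S v | v. realization Q N T v \<and> agree F v w}"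

lemma CS_sub: assumes "S \<subseteq> {..<K}"
  shows "CS S F w \<subseteq> (\<Pi>\<^sub>E j\<in>S. {xs. length xs = l j})"
proof
  fix x assume "x \<in> CS S F w"
  then obtain v where x: "x = XS S v" and rv: "realization Q N T v" unfolding CS_def by auto
  have len: "\<forall>k<K. \<forall>v. realization Q N T v \<longrightarrow> length (psi k v) = l k"
    using vs unfolding valid_shuffle_def by blast
  show "x \<in> (\<Pi>\<^sub>E j\<in>S. {xs. length xs = l j})"
    unfolding x XS_def restrict_PiE_iff using len rv assms by auto
qed

lemma CS_finite: assumes "S \<subseteq> {..<K}" shows "finite (CS S F w)"
proof -
  have "finite S" using assms finite_subset by blast
  then have "finite (\<Pi>\<^sub>E j\<in>S. {xs :: bool list. length xs = l j})"
    by (intro finite_PiE) (auto simp: finite_bool_lists)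
  then show ?thesis by (rule finite_subset[OF CS_sub[OF assms]])
qed

lemma CS_card_le: assumes "S \<subseteq> {..<K}" shows "card (CS S F w) \<le> 2 ^ (\<Sum>j\<in>S. l j)"
proof -
  have fS: "finite S" using assms finite_subset by blast
  then have fin: "finite (\<Pi>\<^sub>E j\<in>S. {xs :: bool list. length xs = l j})"
    by (intro finite_PiE) (auto simp: finite_bool_lists)
  have "card (CS S F w) \<le> card (\<Pi>\<^sub>E j\<in>S. {xs :: bool list. length xs = l j})"
    by (rule card_mono[OF fin CS_sub[OF assms]])
  also have "\<dots> = (\<Prod>j\<in>S. 2 ^ l j)" using fS by (simp add: card_PiE card_bool_lists)
  also have "\<dots> = 2 ^ (\<Sum>j\<in>S. l j)" by (simp add: power_sum)
  finally show ?thesis .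
qed

lemma CS_nonempty: "realization Q N T w \<Longrightarrow> XS S w \<in> CS S F w"
  unfolding CS_def agree_def by auto

lemma CS_card_pos: "S \<subseteq> {..<K} \<Longrightarrow> realization Q N T w \<Longrightarrow> 1 \<le> card (CS S F w)"
  proof -
  assume a: "S \<subseteq> {..<K}" "realization Q N T w"
  have "CS S F w \<noteq> {}" using CS_nonempty[OF a(2)] by blast
  then show ?thesis using CS_finite[OF a(1)] by (simp add: Suc_leI card_gt_0_iff)
qed

lemma CS_mono: "F \<subseteq> F' \<Longrightarrow> CS S F' w \<subseteq> CS S F w"
  unfolding CS_def agree_def by blast

lemma decode:
  assumes rv: "realization Q N T v" and rv': "realization Q N T v'"
    and ag: "agree F v v'" and loc: "Loc Q M (sig q) \<subseteq> F"
    and Sc: "\<forall>j<K. j \<notin> S \<longrightarrow> Loc Q M j \<subseteq> F"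
    and X: "XS S v = XS S v'" and q: "q < Q" and n: "n < N"
  shows "v q n = v' q n"
proof -
  have psi_eq: "psi j v = psi j v'" if j: "j < K" for j
  proof (cases "j \<in> S")
    case True
    then show ?thesis using fun_cong[OF X, of j] unfolding XS_def by simp
  next
    case False
    with Sc j have "Loc Q M j \<subseteq> F" by auto
    then have "\<forall>q<Q. \<forall>n\<in>M j. v q n = v' q n" using ag unfolding agree_def Loc_def by auto
    then show ?thesis using vs j rv rv' unfolding valid_shuffle_def by blast
  qed
  have "\<forall>q'<Q. \<forall>n\<in>M (sig q). v q' n = v' q' n" using ag loc unfolding agree_def Loc_def by auto
  moreover have "\<forall>j<K. sig q \<in> D j \<longrightarrow> psi j v = psi j v'" using psi_eq by blast
  moreover have dec: "\<forall>k<K. \<forall>v v'. realization Q N T v \<longrightarrow> realization Q N T v' \<longrightarrow>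
        (\<forall>q<Q. \<forall>n\<in>M k. v q n = v' q n) \<longrightarrow>
        (\<forall>j<K. k \<in> D j \<longrightarrow> psi j v = psi j v') \<longrightarrow>
        (\<forall>q\<in>W k. \<forall>n<N. v q n = v' q n)"
    using vs unfolding valid_shuffle_def by blast
  ultimately have "\<forall>q'\<in>W (sig q). \<forall>n<N. v q' n = v' q' n"
    using dec[rule_format, OF sig(1)[OF q] rv rv'] by blast
  then show ?thesis using sig[OF q] n by blast
qed

end

fun chain :: "(nat \<Rightarrow> nat set) \<Rightarrow> nat \<Rightarrow> nat set \<Rightarrow> nat list \<Rightarrow> nat" where
  "chain P N A [] = 0"
| "chain P N A (q # L) = card {n. n < N \<and> n \<notin> A \<and> n \<notin> P q} + chain P N (A \<union> P q) L"

context VS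
begin

lemma step1:
  assumes q: "q < Q" and n: "n < N" and nF: "(q,n) \<notin> F" and loc: "Loc Q M (sig q) \<subseteq> F"
    and Sc: "\<forall>j<K. j \<notin> S \<longrightarrow> Loc Q M j \<subseteq> F" and SK: "S \<subseteq> {..<K}"
    and rw: "realization Q N T w"
    and Y: "\<And>w'. realization Q N T w' \<Longrightarrow> Y \<le> card (CS S (insert (q,n) F) w')"
  shows "2^T * Y \<le> card (CS S F w)"
proof -
  define upd where "upd b = w(q := (w q)(n := b))" for b
  define Bs where "Bs = {b :: bool list. length b = T}"
  have rupd: "realization Q N T (upd b)" if "b \<in> Bs" for b
    using rw that q n unfolding realization_def upd_def Bs_def by auto
  have updF: "upd b a c = w a c" if "(a,c) \<in> F" for a c b
    using that nF unfolding upd_def by auto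
  have updq: "upd b q n = b" for b unfolding upd_def by simp
  have sub: "(\<Union>b\<in>Bs. CS S (insert (q,n) F) (upd b)) \<subseteq> CS S F w"
  proof
    fix x assume "x \<in> (\<Union>b\<in>Bs. CS S (insert (q,n) F) (upd b))"
    then obtain b v where v: "x = XS S v" "realization Q N T v" "agree (insert (q,n) F) v (upd b)"
      unfolding CS_def by auto
    have "agree F v w" unfolding agree_def
    proof (intro allI impI)
      fix a c assume "(a,c) \<in> F"
      then show "v a c = w a c" using v(3) updF[of a c b] unfolding agree_def by auto
    qed
    then show "x \<in> CS S F w" using v unfolding CS_def by auto
  qed
  have disj: "CS S (insert (q,n) F) (upd b) \<inter> CS S (insert (q,n) F) (upd b') = {}"
    if "b \<noteq> b'" for b b'
  proof (rule ccontr)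
    assume "CS S (insert (q,n) F) (upd b) \<inter> CS S (insert (q,n) F) (upd b') \<noteq> {}"
    then obtain v v' where v: "realization Q N T v" "agree (insert (q,n) F) v (upd b)"
      and v': "realization Q N T v'" "agree (insert (q,n) F) v' (upd b')"
      and X: "XS S v = XS S v'"
      unfolding CS_def by auto
    have "agree F v v'" unfolding agree_def
    proof (intro allI impI)
      fix a c assume "(a,c) \<in> F"
      then show "v a c = v' a c" using v(2) v'(2) updF[of a c] unfolding agree_def by auto
    qed
    then have "v q n = v' q n" by (rule decode[OF v(1) v'(1) _ loc Sc X q n])
    moreover have "v q n = b" using v(2) updq unfolding agree_def by auto
    moreover have "v' q n = b'" using v'(2) updq unfolding agree_def by auto
    ultimately show False using that by simp
  qed
  have fin: "finite Bs" by (simp add: Bs_def finite_bool_lists)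
  have "2^T * Y = (\<Sum>b\<in>Bs. Y)" by (simp add: Bs_def card_bool_lists)
  also have "\<dots> \<le> (\<Sum>b\<in>Bs. card (CS S (insert (q,n) F) (upd b)))"
    by (rule sum_mono) (use Y rupd in auto)
  also have "\<dots> = card (\<Union>b\<in>Bs. CS S (insert (q,n) F) (upd b))"
    by (rule card_UN_disjoint[symmetric]) (use fin CS_finite[OF SK] disj in auto)
  also have "\<dots> \<le> card (CS S F w)" by (rule card_mono[OF CS_finite[OF SK] sub])
  finally show ?thesis .
qed

lemma stepD:
  assumes "finite Dn"
  shows "Dn \<subseteq> {..<N} \<Longrightarrow> q < Q \<Longrightarrow> (\<forall>n\<in>Dn. (q,n) \<notin> F) \<Longrightarrow> Loc Q M (sig q) \<subseteq> F
    \<Longrightarrow> (\<forall>j<K. j \<notin> S \<longrightarrow> Loc Q M j \<subseteq> F) \<Longrightarrow> S \<subseteq> {..<K}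
    \<Longrightarrow> (\<And>w'. realization Q N T w' \<Longrightarrow> Y \<le> card (CS S (F \<union> {q} \<times> Dn) w'))
    \<Longrightarrow> realization Q N T w \<Longrightarrow> 2^(T * card Dn) * Y \<le> card (CS S F w)"
  using assms
proof (induction Dn arbitrary: F w rule: finite_induct)
  case empty
  then show ?case by simp
next
  case (insert n Dn F w)
  have IH: "2^(T * card Dn) * Y \<le> card (CS S (insert (q,n) F) w')" if "realization Q N T w'" for w'
  proof (rule insert.IH)
    show "Dn \<subseteq> {..<N}" using insert.prems by auto
    show "q < Q" by fact
    show "\<forall>n'\<in>Dn. (q, n') \<notin> insert (q, n) F" using insert.prems insert.hyps by auto
    show "Loc Q M (sig q) \<subseteq> insert (q, n) F" using insert.prems by auto
    show "\<forall>j<K. j \<notin> S \<longrightarrow> Loc Q M j \<subseteq> insert (q, n) F" using insert.prems by auto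
    show "S \<subseteq> {..<K}" by fact
    show "Y \<le> card (CS S (insert (q, n) F \<union> {q} \<times> Dn) w')" if "realization Q N T w'" for w'
    proof -
      have "insert (q, n) F \<union> {q} \<times> Dn = F \<union> {q} \<times> insert n Dn" by auto
      then show ?thesis using insert.prems(7)[OF that] by simp
    qed
    show "realization Q N T w'" by fact
  qed
  have "2^T * (2^(T * card Dn) * Y) \<le> card (CS S F w)"
  proof (rule step1[where n=n and q=q and F=F and S=S and w=w and Y="2^(T * card Dn) * Y"])
    show "(q, n) \<notin> F" "n < N" using insert.prems by auto
    show "realization Q N T w'' \<Longrightarrow> 2^(T * card Dn) * Y \<le> card (CS S (insert (q, n) F) w'')" for w''
      by (rule IH)
  qed (use insert.prems in auto)
  moreover have "card (insert n Dn) = Suc (card Dn)" using insert.hyps by simp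
  ultimately show ?case by (simp add: power_add mult.assoc)
qed

lemma chain_bound:
  "distinct L \<Longrightarrow> set L \<subseteq> {..<Q} \<Longrightarrow> (\<forall>q\<in>set L. \<forall>n<N. n \<notin> A \<longrightarrow> (q,n) \<notin> F)
   \<Longrightarrow> (L \<noteq> [] \<longrightarrow> (\<forall>j<K. j \<notin> S \<longrightarrow> Loc Q M j \<subseteq> F \<union> Loc Q M (sig (hd L))))
   \<Longrightarrow> S \<subseteq> {..<K} \<Longrightarrow> realization Q N T w
   \<Longrightarrow> 2^(T * chain (\<lambda>q. M (sig q)) N A L) \<le> card (CS S F w)"
proof (induction L arbitrary: A F w)
  case Nil
  then show ?case using CS_card_pos by simp
next
  case (Cons q L)
  define Dn where "Dn = {n. n < N \<and> n \<notin> A \<and> n \<notin> M (sig q)}"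
  define F1 where "F1 = F \<union> Loc Q M (sig q)"
  define F' where "F' = F1 \<union> {q} \<times> Dn"
  define A' where "A' = A \<union> M (sig q)"
  have q: "q < Q" using Cons.prems by auto
  have IH: "2^(T * chain (\<lambda>q. M (sig q)) N A' L) \<le> card (CS S F' w')" if "realization Q N T w'" for w'
  proof (rule Cons.IH)
    show "distinct L" "set L \<subseteq> {..<Q}" using Cons.prems by auto
    show "\<forall>q'\<in>set L. \<forall>n<N. n \<notin> A' \<longrightarrow> (q', n) \<notin> F'"
      using Cons.prems unfolding F'_def F1_def A'_def Loc_def by auto
    show "L \<noteq> [] \<longrightarrow> (\<forall>j<K. j \<notin> S \<longrightarrow> Loc Q M j \<subseteq> F' \<union> Loc Q M (sig (hd L)))"
      using Cons.prems unfolding F'_def F1_def by auto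
    show "S \<subseteq> {..<K}" "realization Q N T w'" using Cons.prems that by auto
  qed
  have "2^(T * card Dn) * 2^(T * chain (\<lambda>q. M (sig q)) N A' L) \<le> card (CS S F1 w)"
  proof (rule stepD)
    show "finite Dn" "Dn \<subseteq> {..<N}" unfolding Dn_def by auto
    show "q < Q" by fact
    show "\<forall>n\<in>Dn. (q, n) \<notin> F1" using Cons.prems unfolding Dn_def F1_def Loc_def by auto
    show "Loc Q M (sig q) \<subseteq> F1" unfolding F1_def by auto
    show "\<forall>j<K. j \<notin> S \<longrightarrow> Loc Q M j \<subseteq> F1" using Cons.prems unfolding F1_def by auto
    show "S \<subseteq> {..<K}" "realization Q N T w" using Cons.prems by auto
    show "2^(T * chain (\<lambda>q. M (sig q)) N A' L) \<le> card (CS S (F1 \<union> {q} \<times> Dn) w')"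
      if "realization Q N T w'" for w' using IH[OF that] unfolding F'_def .
  qed
  also have "card (CS S F1 w) \<le> card (CS S F w)"
    by (rule card_mono[OF CS_finite CS_mono]) (use Cons.prems in \<open>auto simp: F1_def\<close>)
  finally show ?case unfolding Dn_def A'_def by (simp add: power_add distrib_left)
qed

lemma w0_real: "realization Q N T (\<lambda>q n. replicate T False)"
  unfolding realization_def by simp

lemma info1:
  assumes "distinct L" "set L \<subseteq> {..<Q}"
  shows "T * chain (\<lambda>q. M (sig q)) N {} L \<le> (\<Sum>j<K. l j)"
proof -
  have "2^(T * chain (\<lambda>q. M (sig q)) N {} L) \<le> card (CS {..<K} {} (\<lambda>q n. replicate T False))"
    by (rule chain_bound) (use assms w0_real in auto)
  also have "\<dots> \<le> 2 ^ (\<Sum>j<K. l j)" using CS_card_le by auto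
  finally show ?thesis by (simp add: power_le_imp_le_exp)
qed

lemma info2:
  assumes "distinct L" "set L \<subseteq> {..<Q}" "L \<noteq> []"
  shows "T * chain (\<lambda>q. M (sig q)) N {} L \<le> (\<Sum>j\<in>{..<K}-{sig (hd L)}. l j)"
proof -
  have "2^(T * chain (\<lambda>q. M (sig q)) N {} L) \<le> card (CS ({..<K}-{sig (hd L)}) {} (\<lambda>q n. replicate T False))"
    by (rule chain_bound) (use assms w0_real in auto)
  also have "\<dots> \<le> 2 ^ (\<Sum>j\<in>{..<K}-{sig (hd L)}. l j)" by (rule CS_card_le) auto
  finally show ?thesis by (simp add: power_le_imp_le_exp)
qed

end

definition gfun :: "nat \<Rightarrow> nat \<Rightarrow> real" where
  "gfun m s = (real m - real s) / (real s + 1)"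

definition Gsum :: "(nat \<Rightarrow> nat set) \<Rightarrow> nat \<Rightarrow> nat set \<Rightarrow> nat set \<Rightarrow> real" where
  "Gsum P N A R = (\<Sum>n\<in>{..<N} - A. gfun (card R) (card {q\<in>R. n \<in> P q}))"

lemma card_filter_sum: "finite B \<Longrightarrow> real (card {x\<in>B. Pr x}) = (\<Sum>x\<in>B. if Pr x then 1 else 0)"
  by (simp add: sum.If_cases Int_def)

lemma G_rec:
  assumes fR: "finite R" and ne: "R \<noteq> {}"
  shows "(\<Sum>k\<in>R. real (card {n. n < N \<and> n \<notin> A \<and> n \<notin> P k}) + Gsum P N (A \<union> P k) (R - {k}))
         = real (card R) * Gsum P N A R"
proof -
  define m where "m = card R"
  define s where "s n = card {q\<in>R. n \<in> P q}" for n
  have m1: "m \<ge> 1" using fR ne unfolding m_def by (simp add: Suc_leI card_gt_0_iff)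
  have cnt: "real (card {n. n < N \<and> n \<notin> A \<and> n \<notin> P k}) = (\<Sum>n\<in>{..<N} - A. if n \<notin> P k then 1 else 0)" for k
  proof -
    have "{n. n < N \<and> n \<notin> A \<and> n \<notin> P k} = {n \<in> {..<N} - A. n \<notin> P k}" by auto
    then show ?thesis using card_filter_sum[of "{..<N} - A" "\<lambda>n. n \<notin> P k"] by simp
  qed
  have Gk: "Gsum P N (A \<union> P k) (R - {k}) = (\<Sum>n\<in>{..<N} - A. if n \<notin> P k then gfun (m - 1) (s n) else 0)"
    if k: "k \<in> R" for k
  proof -
    have "(\<Sum>n\<in>{..<N} - A. if n \<notin> P k then gfun (m - 1) (s n) else 0)
        = (\<Sum>n\<in>{n \<in> {..<N} - A. n \<notin> P k}. gfun (m - 1) (s n))"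
      by (rule sum.inter_filter[symmetric]) simp
    also have "{n \<in> {..<N} - A. n \<notin> P k} = {..<N} - (A \<union> P k)" by auto
    also have "(\<Sum>n\<in>{..<N} - (A \<union> P k). gfun (m - 1) (s n))
             = (\<Sum>n\<in>{..<N} - (A \<union> P k). gfun (card (R - {k})) (card {q\<in>R - {k}. n \<in> P q}))"
    proof (rule sum.cong[OF refl])
      fix n assume "n \<in> {..<N} - (A \<union> P k)"
      then have "{q\<in>R - {k}. n \<in> P q} = {q\<in>R. n \<in> P q}" by auto
      then show "gfun (m - 1) (s n) = gfun (card (R - {k})) (card {q\<in>R - {k}. n \<in> P q})"
        using k fR unfolding s_def m_def by simp
    qed
    finally show ?thesis unfolding Gsum_def by simp
  qed
  have "(\<Sum>k\<in>R. real (card {n. n < N \<and> n \<notin> A \<and> n \<notin> P k}) + Gsum P N (A \<union> P k) (R - {k}))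
      = (\<Sum>k\<in>R. \<Sum>n\<in>{..<N} - A. if n \<notin> P k then 1 + gfun (m - 1) (s n) else 0)"
    by (rule sum.cong[OF refl]) (simp add: cnt Gk sum.distrib[symmetric] if_distrib cong: if_cong)
  also have "\<dots> = (\<Sum>n\<in>{..<N} - A. \<Sum>k\<in>R. if n \<notin> P k then 1 + gfun (m - 1) (s n) else 0)"
    by (rule sum.swap)
  also have "\<dots> = (\<Sum>n\<in>{..<N} - A. real m * gfun m (s n))"
  proof (rule sum.cong[OF refl])
    fix n
    have "(\<Sum>k\<in>R. if n \<notin> P k then 1 + gfun (m - 1) (s n) else 0)
        = (1 + gfun (m - 1) (s n)) * real (card {k\<in>R. n \<notin> P k})"
      using card_filter_sum[OF fR, of "\<lambda>k. n \<notin> P k"]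
      by (simp add: sum_distrib_left if_distrib mult.commute cong: if_cong)
    also have "{k\<in>R. n \<notin> P k} = R - {q\<in>R. n \<in> P q}" by auto
    also have "real (card (R - {q\<in>R. n \<in> P q})) = real m - real (s n)"
    proof -
      have "card (R - {q\<in>R. n \<in> P q}) = m - s n"
        unfolding m_def s_def by (rule card_Diff_subset) (use fR in auto)
      moreover have "s n \<le> m" unfolding m_def s_def by (rule card_mono[OF fR]) auto
      ultimately show ?thesis by simp
    qed
    also have "(1 + gfun (m - 1) (s n)) * (real m - real (s n)) = real m * gfun m (s n)"
      using m1 unfolding gfun_def by (simp add: of_nat_diff field_simps)
    finally show "(\<Sum>k\<in>R. if n \<notin> P k then 1 + gfun (m - 1) (s n) else 0) = real m * gfun m (s n)" .
  qed
  also have "\<dots> = real m * Gsum P N A R"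
    unfolding Gsum_def m_def s_def by (simp add: sum_distrib_left)
  finally show ?thesis unfolding m_def .
qed

lemma comb_E:
  assumes "finite R"
  shows "\<forall>A. \<exists>L. distinct L \<and> set L = R \<and> Gsum P N A R \<le> real (chain P N A L)"
  using assms
proof (induction R rule: finite_remove_induct)
  case empty
  then show ?case by (auto simp: Gsum_def gfun_def intro!: exI[of _ "[]"])
next
  case (remove R)
  show ?case
  proof
    fix A
    define f where "f k = real (card {n. n < N \<and> n \<notin> A \<and> n \<notin> P k}) + Gsum P N (A \<union> P k) (R - {k})" for k
    have "\<exists>k\<in>R. Gsum P N A R \<le> f k"
    proof (rule ccontr)
      assume "\<not> (\<exists>k\<in>R. Gsum P N A R \<le> f k)"
      then have "\<forall>k\<in>R. f k < Gsum P N A R" by auto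
      then have "sum f R < (\<Sum>k\<in>R. Gsum P N A R)"
        by (intro sum_strict_mono) (use remove in auto)
      also have "\<dots> = real (card R) * Gsum P N A R" by simp
      finally show False using G_rec[OF remove(1,2), of N A P] unfolding f_def by simp
    qed
    then obtain k where k: "k \<in> R" "Gsum P N A R \<le> f k" by blast
    obtain L' where L': "distinct L'" "set L' = R - {k}"
      "Gsum P N (A \<union> P k) (R - {k}) \<le> real (chain P N (A \<union> P k) L')"
      using remove(4)[OF k(1)] by blast
    show "\<exists>L. distinct L \<and> set L = R \<and> Gsum P N A R \<le> real (chain P N A L)"
    proof (intro exI conjI)
      show "distinct (k # L')" using L' by auto
      show "set (k # L') = R" using L' k by auto
      show "Gsum P N A R \<le> real (chain P N A (k # L'))"
        using k(2) L'(3) unfolding f_def by simp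
    qed
  qed
qed

lemma comb_S:
  assumes fR: "finite R"
  shows "\<exists>ord. (\<forall>k\<in>R. distinct (ord k) \<and> set (ord k) = R \<and> ord k \<noteq> [] \<and> hd (ord k) = k)
     \<and> real (card R) * Gsum P N A R \<le> (\<Sum>k\<in>R. real (chain P N A (ord k)))"
proof -
  have "\<forall>k. \<exists>L. distinct L \<and> set L = R - {k} \<and> Gsum P N (A \<union> P k) (R - {k}) \<le> real (chain P N (A \<union> P k) L)"
    using comb_E[of "R - {_}" P N] fR by blast
  then obtain Lf where Lf: "\<And>k. distinct (Lf k) \<and> set (Lf k) = R - {k}
      \<and> Gsum P N (A \<union> P k) (R - {k}) \<le> real (chain P N (A \<union> P k) (Lf k))"
    by metis
  define ord where "ord k = k # Lf k" for k
  show ?thesis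
  proof (intro exI conjI)
    show "\<forall>k\<in>R. distinct (ord k) \<and> set (ord k) = R \<and> ord k \<noteq> [] \<and> hd (ord k) = k"
      using Lf unfolding ord_def by auto
    show "real (card R) * Gsum P N A R \<le> (\<Sum>k\<in>R. real (chain P N A (ord k)))"
    proof (cases "R = {}")
      case True then show ?thesis by simp
    next
      case False
      have "real (card R) * Gsum P N A R
          = (\<Sum>k\<in>R. real (card {n. n < N \<and> n \<notin> A \<and> n \<notin> P k}) + Gsum P N (A \<union> P k) (R - {k}))"
        using G_rec[OF fR False] by simp
      also have "\<dots> \<le> (\<Sum>k\<in>R. real (chain P N A (ord k)))"
        by (rule sum_mono) (use Lf in \<open>simp add: ord_def\<close>)
      finally show ?thesis .
    qed
  qed
qed

context VS
begin

lemma LB_bits: "real T * Gsum (\<lambda>q. M (sig q)) N {} {..<Q} \<le> real (\<Sum>j<K. l j)"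
proof -
  obtain L where L: "distinct L" "set L = {..<Q}"
    "Gsum (\<lambda>q. M (sig q)) N {} {..<Q} \<le> real (chain (\<lambda>q. M (sig q)) N {} L)"
    using comb_E[of "{..<Q}" "\<lambda>q. M (sig q)" N] by blast
  have "T * chain (\<lambda>q. M (sig q)) N {} L \<le> (\<Sum>j<K. l j)" using info1 L by auto
  then have "real T * real (chain (\<lambda>q. M (sig q)) N {} L) \<le> real (\<Sum>j<K. l j)"
    by (metis of_nat_le_iff of_nat_mult)
  moreover have "real T * Gsum (\<lambda>q. M (sig q)) N {} {..<Q} \<le> real T * real (chain (\<lambda>q. M (sig q)) N {} L)"
    using L(3) by (simp add: mult_left_mono)
  ultimately show ?thesis by linarith
qed

lemma silent:
  assumes tight: "real (\<Sum>j<K. l j) \<le> real T * Gsum (\<lambda>q. M (sig q)) N {} {..<Q}"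
  shows "\<forall>q<Q. l (sig q) = 0"
proof -
  obtain ord where ord: "\<forall>k\<in>{..<Q}. distinct (ord k) \<and> set (ord k) = {..<Q} \<and> ord k \<noteq> [] \<and> hd (ord k) = k"
    and S: "real (card {..<Q}) * Gsum (\<lambda>q. M (sig q)) N {} {..<Q} \<le> (\<Sum>k\<in>{..<Q}. real (chain (\<lambda>q. M (sig q)) N {} (ord k)))"
    using comb_S[of "{..<Q}" "\<lambda>q. M (sig q)" N "{}"] by blast
  define B where "B = real (\<Sum>j<K. l j)"
  define Gv where "Gv = Gsum (\<lambda>q. M (sig q)) N {} {..<Q}"
  define c where "c k = chain (\<lambda>q. M (sig q)) N {} (ord k)" for k
  define Sc where "Sc = (\<Sum>k\<in>{..<Q}. real (c k))"
  define Sl where "Sl = (\<Sum>k\<in>{..<Q}. real (l (sig k)))"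
  have each: "real T * real (c k) \<le> B - real (l (sig k))" if k: "k < Q" for k
  proof -
    have h1: "T * c k \<le> (\<Sum>j\<in>{..<K}-{sig k}. l j)"
      using info2[of "ord k"] ord k unfolding c_def by auto
    have h2: "(\<Sum>j<K. l j) = l (sig k) + (\<Sum>j\<in>{..<K}-{sig k}. l j)"
      by (rule sum.remove) (use sig(1)[OF k] in auto)
    have "T * c k + l (sig k) \<le> (\<Sum>j<K. l j)" using h1 h2 by linarith
    then have "real (T * c k + l (sig k)) \<le> real (\<Sum>j<K. l j)" by (simp only: of_nat_le_iff)
    then show ?thesis unfolding B_def by simp
  qed
  have A1: "real Q * Gv \<le> Sc" using S unfolding Gv_def Sc_def c_def by simp
  have "real T * Sc = (\<Sum>k\<in>{..<Q}. real T * real (c k))"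
    unfolding Sc_def by (simp add: sum_distrib_left)
  also have "\<dots> \<le> (\<Sum>k\<in>{..<Q}. B - real (l (sig k)))"
    by (rule sum_mono) (use each in auto)
  also have "\<dots> = real Q * B - Sl"
    unfolding Sl_def by (simp add: sum_subtractf)
  finally have A2: "real T * Sc \<le> real Q * B - Sl" .
  have A3: "B \<le> real T * Gv" using tight unfolding B_def Gv_def .
  have A4: "real T * (real Q * Gv) \<le> real T * Sc" using A1 by (simp add: mult_left_mono)
  have A5: "real Q * B \<le> real Q * (real T * Gv)" using A3 by (simp add: mult_left_mono)
  have A6: "real Q * (real T * Gv) = real T * (real Q * Gv)" by simp
  have "Sl \<le> 0" using A2 A4 A5 A6 by linarith
  moreover have "\<forall>k\<in>{..<Q}. 0 \<le> real (l (sig k))" by simp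
  ultimately have "\<forall>k\<in>{..<Q}. real (l (sig k)) = 0"
    unfolding Sl_def using sum_nonneg_eq_0_iff[of "{..<Q}" "\<lambda>k. real (l (sig k))"]
    by (meson antisym finite_lessThan sum_nonneg)
  then show ?thesis by auto
qed

lemma vs_len: "k < K \<Longrightarrow> realization Q N T v \<Longrightarrow> length (psi k v) = l k"
  using vs unfolding valid_shuffle_def by blast

lemma vs_loc: "k < K \<Longrightarrow> realization Q N T v \<Longrightarrow> realization Q N T v' \<Longrightarrow>
   (\<forall>q<Q. \<forall>n\<in>M k. v q n = v' q n) \<Longrightarrow> psi k v = psi k v'"
  using vs unfolding valid_shuffle_def by blast

lemma vs_dec: "k < K \<Longrightarrow> realization Q N T v \<Longrightarrow> realization Q N T v' \<Longrightarrow>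
   (\<forall>q<Q. \<forall>n\<in>M k. v q n = v' q n) \<Longrightarrow> (\<forall>j<K. k \<in> D j \<longrightarrow> psi j v = psi j v') \<Longrightarrow>
   q \<in> W k \<Longrightarrow> n < N \<Longrightarrow> v q n = v' q n"
  using vs unfolding valid_shuffle_def by blast

lemma helper_exists:
  assumes sil: "\<forall>q<Q. l (sig q) = 0" and T1: "T \<ge> 1"
    and n: "n < N" and q: "q < Q" and nM: "n \<notin> M (sig q)"
  shows "\<exists>j<K. j \<notin> sig ` {..<Q} \<and> n \<in> M j"
proof (rule ccontr)
  assume nh: "\<not> (\<exists>j<K. j \<notin> sig ` {..<Q} \<and> n \<in> M j)"
  define v :: ivals where "v = (\<lambda>q n. replicate T False)"
  define v' :: ivals where "v' = v(q := (v q)(n := replicate T True))"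
  have rv: "realization Q N T v" "realization Q N T v'" unfolding realization_def v'_def v_def by auto
  have psieq: "psi j v = psi j v'" if j: "j < K" for j
  proof (cases "j \<in> sig ` {..<Q}")
    case True
    then obtain q' where "q' < Q" "j = sig q'" by auto
    then have "l j = 0" using sil by auto
    then have "length (psi j v) = 0" "length (psi j v') = 0" using vs_len[OF j rv(1)] vs_len[OF j rv(2)] by auto
    then show ?thesis by simp
  next
    case False
    then have "n \<notin> M j" using nh j by auto
    then have "\<forall>q<Q. \<forall>n'\<in>M j. v q n' = v' q n'" unfolding v'_def by auto
    then show ?thesis by (rule vs_loc[OF j rv])
  qed
  have agl: "\<forall>q'<Q. \<forall>n'\<in>M (sig q). v q' n' = v' q' n'" using nM unfolding v'_def by auto
  have psiall: "\<forall>j<K. sig q \<in> D j \<longrightarrow> psi j v = psi j v'" using psieq by blast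
  have "v q n = v' q n" by (rule vs_dec[OF sig(1)[OF q] rv agl psiall sig(2)[OF q] n])
  moreover have "v q n \<noteq> v' q n" using T1 unfolding v'_def v_def
    by (cases T) auto
  ultimately show False by simp
qed

end

lemma ao_M: "assignment_ok Q N K M W \<Longrightarrow> k < K \<Longrightarrow> M k \<subseteq> {..<N}"
  unfolding assignment_ok_def by (elim conjE) (drule spec[of _ k], simp)
lemma ao_W: "assignment_ok Q N K M W \<Longrightarrow> k < K \<Longrightarrow> W k \<subseteq> {..<Q}"
  unfolding assignment_ok_def by (elim conjE) (drule spec[of _ k], simp)
lemma ao_cover: "assignment_ok Q N K M W \<Longrightarrow> n < N \<Longrightarrow> \<exists>j<K. n \<in> M j"
proof -
  assume a: "assignment_ok Q N K M W" "n < N"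
  then have "(\<Union>k<K. M k) = {..<N}" unfolding assignment_ok_def by (elim conjE)
  then have "n \<in> (\<Union>k<K. M k)" using a(2) by simp
  then show ?thesis by auto
qed
lemma ao_Wcover: "assignment_ok Q N K M W \<Longrightarrow> q < Q \<Longrightarrow> \<exists>j<K. q \<in> W j"
proof -
  assume a: "assignment_ok Q N K M W" "q < Q"
  then have "(\<Union>k<K. W k) = {..<Q}" unfolding assignment_ok_def by (elim conjE)
  then have "q \<in> (\<Union>k<K. W k)" using a(2) by simp
  then show ?thesis by auto
qed
lemma ao_disj: "assignment_ok Q N K M W \<Longrightarrow> k < K \<Longrightarrow> j < K \<Longrightarrow> k \<noteq> j \<Longrightarrow> W k \<inter> W j = {}"
  unfolding assignment_ok_def by simp

definition unc_psi :: "nat \<Rightarrow> (nat \<Rightarrow> nat set) \<Rightarrow> nat \<Rightarrow> ivals \<Rightarrow> bool list" where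
  "unc_psi Q M j v = concat (map (\<lambda>n. concat (map (\<lambda>q. v q n) [0..<Q])) (sorted_list_of_set (M j)))"

lemma inner_lens: "realization Q N T v \<Longrightarrow> n < N \<Longrightarrow> map length (map (\<lambda>q. v q n) [0..<Q]) = replicate Q T"
proof -
  assume a: "realization Q N T v" "n < N"
  have "map length (map (\<lambda>q. v q n) [0..<Q]) = map (\<lambda>q. T) [0..<Q]"
    using a unfolding realization_def by (auto intro!: map_cong)
  then show ?thesis by (simp add: map_replicate_const)
qed

lemma inner_len: "realization Q N T v \<Longrightarrow> n < N \<Longrightarrow> length (concat (map (\<lambda>q. v q n) [0..<Q])) = Q * T"
  using inner_lens[of Q N T v n] by (simp add: length_concat sum_list_replicate)

lemma outer_lens: assumes "realization Q N T v" "M j \<subseteq> {..<N}"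
  shows "map length (map (\<lambda>n. concat (map (\<lambda>q. v q n) [0..<Q])) (sorted_list_of_set (M j)))
       = replicate (card (M j)) (Q * T)"
proof -
  have fin: "finite (M j)" using assms(2) finite_subset by blast
  have "map length (map (\<lambda>n. concat (map (\<lambda>q. v q n) [0..<Q])) (sorted_list_of_set (M j)))
      = map (\<lambda>n. Q * T) (sorted_list_of_set (M j))"
    using fin assms inner_len by (auto intro!: map_cong)
  also have "\<dots> = replicate (card (M j)) (Q * T)" using fin by (simp add: map_replicate_const)
  finally show ?thesis .
qed

lemma unc_len: "realization Q N T v \<Longrightarrow> M j \<subseteq> {..<N} \<Longrightarrow> length (unc_psi Q M j v) = card (M j) * (Q * T)"
  unfolding unc_psi_def using outer_lens[of Q N T v M j] by (simp add: length_concat sum_list_replicate)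

lemma unc_valid:
  assumes ao: "assignment_ok Q N K M W"
  shows "valid_shuffle Q N T K M W (\<lambda>j. card (M j) * (Q * T)) (unc_psi Q M) (\<lambda>j. {..<K} - {j})"
proof -
  have MN: "\<And>k. k < K \<Longrightarrow> M k \<subseteq> {..<N}" using ao_M[OF ao] .
  have cover: "\<And>n. n < N \<Longrightarrow> \<exists>j<K. n \<in> M j" using ao_cover[OF ao] .
  have WQ: "\<And>k. k < K \<Longrightarrow> W k \<subseteq> {..<Q}" using ao_W[OF ao] .
  have locl: "unc_psi Q M k v = unc_psi Q M k v'"
    if k: "k < K" and ag: "\<forall>q<Q. \<forall>n\<in>M k. v q n = v' q n" for k v v'
  proof -
    have fin: "finite (M k)" using MN[OF k] finite_subset by blast
    show ?thesis unfolding unc_psi_def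
      by (rule arg_cong[where f=concat], rule map_cong[OF refl], rule arg_cong[where f=concat], rule map_cong[OF refl])
         (use ag fin in auto)
  qed
  have decd: "v q n = v' q n"
    if k: "k < K" and rv: "realization Q N T v" and rv': "realization Q N T v'"
      and ag: "\<forall>q<Q. \<forall>n\<in>M k. v q n = v' q n"
      and ps: "\<forall>j<K. k \<in> {..<K} - {j} \<longrightarrow> unc_psi Q M j v = unc_psi Q M j v'"
      and q: "q \<in> W k" and n: "n < N" for k v v' q n
  proof -
    have qQ: "q < Q" using WQ[OF k] q by auto
    obtain j where j: "j < K" "n \<in> M j" using cover[OF n] by blast
    show ?thesis
    proof (cases "j = k")
      case True then show ?thesis using ag qQ j by auto
    next
      case False
      then have "unc_psi Q M j v = unc_psi Q M j v'" using ps j k by auto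
      then have "map (\<lambda>n. concat (map (\<lambda>q. v q n) [0..<Q])) (sorted_list_of_set (M j))
               = map (\<lambda>n. concat (map (\<lambda>q. v' q n) [0..<Q])) (sorted_list_of_set (M j))"
        unfolding unc_psi_def
        by (rule concat_eq_sameD) (simp only: outer_lens[of Q N T v M j, OF rv MN[OF j(1)]] outer_lens[of Q N T v' M j, OF rv' MN[OF j(1)]])
      moreover have "n \<in> set (sorted_list_of_set (M j))"
        using j MN[OF j(1)] finite_subset by (metis finite_lessThan set_sorted_list_of_set)
      ultimately have "concat (map (\<lambda>q. v q n) [0..<Q]) = concat (map (\<lambda>q. v' q n) [0..<Q])"
        by (simp add: map_eq_conv)
      then have "map (\<lambda>q. v q n) [0..<Q] = map (\<lambda>q. v' q n) [0..<Q]"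
        by (rule concat_eq_sameD) (simp only: inner_lens[OF rv n] inner_lens[OF rv' n])
      then show ?thesis using qQ by (simp add: map_eq_conv)
    qed
  qed
  show ?thesis unfolding valid_shuffle_def
    apply (intro conjI allI impI ballI)
    subgoal by simp
    subgoal for k v by (rule unc_len) (use MN in auto)
    subgoal for k v v' by (rule locl)
    subgoal for k v v' q n by (rule decd)
    done
qed

lemma min_load_attained:
  assumes ao: "assignment_ok Q N K M W"
  obtains l psi D where "valid_shuffle Q N T K M W l psi D"
    "min_load Q N T K M W = real (\<Sum>k<K. l k) / real (Q * N * T)"
    "\<And>l' psi' D'. valid_shuffle Q N T K M W l' psi' D' \<Longrightarrow> (\<Sum>k<K. l k) \<le> (\<Sum>k<K. l' k)"
proof -
  define NS where "NS = {\<Sum>k<K. l k | l psi D. valid_shuffle Q N T K M W l psi D}"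
  have ex: "\<exists>x. x \<in> NS" using unc_valid[OF ao, of T] unfolding NS_def by blast
  define m0 where "m0 = (LEAST x. x \<in> NS)"
  have "m0 \<in> NS" unfolding m0_def using ex by (rule LeastI_ex)
  then obtain l psi D where v: "valid_shuffle Q N T K M W l psi D" and m0: "m0 = (\<Sum>k<K. l k)"
    unfolding NS_def by blast
  have minim: "(\<Sum>k<K. l k) \<le> (\<Sum>k<K. l' k)" if "valid_shuffle Q N T K M W l' psi' D'" for l' psi' D'
  proof -
    have "(\<Sum>k<K. l' k) \<in> NS" using that unfolding NS_def by blast
    then show ?thesis unfolding m0[symmetric] m0_def by (rule Least_le)
  qed
  have "min_load Q N T K M W = real (\<Sum>k<K. l k) / real (Q * N * T)"
    unfolding min_load_def
  proof (rule cInf_eq_minimum)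
    show "real (\<Sum>k<K. l k) / real (Q * N * T)
      \<in> {real (\<Sum>k<K. l k) / real (Q * N * T) |l psi D. valid_shuffle Q N T K M W l psi D}"
      using v by blast
    fix x assume "x \<in> {real (\<Sum>k<K. l k) / real (Q * N * T) |l psi D. valid_shuffle Q N T K M W l psi D}"
    then obtain l' psi' D' where "valid_shuffle Q N T K M W l' psi' D'" "x = real (\<Sum>k<K. l' k) / real (Q * N * T)"
      by blast
    then have h: "real (\<Sum>k<K. l k) \<le> real (\<Sum>k<K. l' k)" "x = real (\<Sum>k<K. l' k) / real (Q * N * T)"
      using minim of_nat_mono by blast+
    show "real (\<Sum>k<K. l k) / real (Q * N * T) \<le> x"
      unfolding h(2) by (rule divide_right_mono[OF h(1)]) simp
  qed
  then show ?thesis using that v minim by blast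
qed

lemma min_load_le:
  assumes ao: "assignment_ok Q N K M W" and v: "valid_shuffle Q N T K M W l psi D"
  shows "min_load Q N T K M W \<le> real (\<Sum>k<K. l k) / real (Q * N * T)"
proof -
  obtain l0 psi0 D0 where "min_load Q N T K M W = real (\<Sum>k<K. l0 k) / real (Q * N * T)"
    "(\<Sum>k<K. l0 k) \<le> (\<Sum>k<K. l k)"
    using min_load_attained[OF ao, of T] v by metis
  moreover have "real (\<Sum>k<K. l0 k) \<le> real (\<Sum>k<K. l k)" using calculation(2) by (simp only: of_nat_le_iff)
  ultimately show ?thesis by (simp only:) (rule divide_right_mono, simp_all)
qed

definition sn :: "nat \<Rightarrow> nat \<Rightarrow> (nat \<Rightarrow> nat set) \<Rightarrow> (nat \<Rightarrow> nat set) \<Rightarrow> nat \<Rightarrow> nat" where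
  "sn Q K M W n = card {q \<in> {..<Q}. n \<in> M (sigf K W q)}"

lemma sigf_props:
  assumes ao: "assignment_ok Q N K M W" and q: "q < Q"
  shows "sigf K W q < K" "q \<in> W (sigf K W q)"
proof -
  have "\<exists>k. k < K \<and> q \<in> W k" using ao_Wcover[OF ao q] by blast
  then show "sigf K W q < K" "q \<in> W (sigf K W q)" unfolding sigf_def by (metis (mono_tags, lifting) someI_ex)+
qed

lemma rstar_props:
  assumes Q1: "Q \<ge> 1"
  shows "r_star cm cs Q \<le> Q" "\<And>r. r \<le> Q \<Longrightarrow> cost_r cm cs Q (r_star cm cs Q) \<le> cost_r cm cs Q r"
    "\<And>r. r \<le> Q \<Longrightarrow> (\<forall>r'\<le>Q. cost_r cm cs Q r \<le> cost_r cm cs Q r') \<Longrightarrow> r \<le> r_star cm cs Q"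
proof -
  define Am where "Am = {r \<in> {0..Q}. \<forall>r'\<in>{0..Q}. cost_r cm cs Q r \<le> cost_r cm cs Q r'}"
  have fin: "finite Am" unfolding Am_def by auto
  define c0 where "c0 = Min (cost_r cm cs Q ` {0..Q})"
  have "c0 \<in> cost_r cm cs Q ` {0..Q}" unfolding c0_def by (rule Min_in) auto
  then obtain r0 where r0: "r0 \<in> {0..Q}" "cost_r cm cs Q r0 = c0" by blast
  have "r0 \<in> Am" unfolding Am_def using r0 c0_def by auto
  then have ne: "Am \<noteq> {}" by blast
  have rs: "r_star cm cs Q = Max Am" unfolding r_star_def Am_def by simp
  have "Max Am \<in> Am" by (rule Max_in[OF fin ne])
  then show "r_star cm cs Q \<le> Q" "\<And>r. r \<le> Q \<Longrightarrow> cost_r cm cs Q (r_star cm cs Q) \<le> cost_r cm cs Q r"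
    unfolding rs Am_def by auto
  show "r \<le> r_star cm cs Q" if "r \<le> Q" "\<forall>r'\<le>Q. cost_r cm cs Q r \<le> cost_r cm cs Q r'" for r
  proof -
    have "r \<in> Am" unfolding Am_def using that by auto
    then show ?thesis unfolding rs by (rule Max_ge[OF fin])
  qed
qed

locale CFG =
  fixes cm cs cr :: real and Q T N K :: nat and M W :: "nat \<Rightarrow> nat set"
  assumes ao: "assignment_ok Q N K M W" and N1: "N \<ge> 1" and Q1: "Q \<ge> 1" and T1: "T \<ge> 1"
    and cm: "cm > 0" and cs: "cs > 0" and cr: "cr > 0"
begin

abbreviation "sg \<equiv> sigf K W"
abbreviation "s \<equiv> sn Q K M W"
abbreviation "MaxM \<equiv> Max ((\<lambda>k. card (M k)) ` {..<K})"
abbreviation "MaxW \<equiv> Max ((\<lambda>k. card (W k)) ` {..<K})"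
abbreviation "rs \<equiv> r_star cm cs Q"

lemma K_pos: "K > 0"
  using ao_cover[OF ao, of 0] N1 by auto

lemma MaxM_ge: "k < K \<Longrightarrow> card (M k) \<le> MaxM"
  by (rule Max_ge) auto

lemma MaxW_ge: "k < K \<Longrightarrow> card (W k) \<le> MaxW"
  by (rule Max_ge) auto

lemma MaxW_ge1: "1 \<le> MaxW"
proof -
  have q: "0 < Q" using Q1 by simp
  have k: "sg 0 < K" "0 \<in> W (sg 0)" using sigf_props[OF ao q] by auto
  have "finite (W (sg 0))" using ao_W[OF ao k(1)] finite_subset by blast
  then have "1 \<le> card (W (sg 0))" using k(2) by (metis One_nat_def Suc_leI card_gt_0_iff empty_iff)
  also have "\<dots> \<le> MaxW" by (rule MaxW_ge[OF k(1)])
  finally show ?thesis .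
qed

lemma sum_s: "real (\<Sum>q<Q. card (M (sg q))) = (\<Sum>n<N. real (s n))"
proof -
  have each: "real (card (M (sg q))) = (\<Sum>n<N. if n \<in> M (sg q) then 1 else 0)" if q: "q < Q" for q
  proof -
    have "M (sg q) = {n \<in> {..<N}. n \<in> M (sg q)}"
      using ao_M[OF ao sigf_props(1)[OF ao q]] by auto
    then have "card (M (sg q)) = card {n \<in> {..<N}. n \<in> M (sg q)}" by (rule arg_cong[where f=card])
    also have "real \<dots> = (\<Sum>n<N. if n \<in> M (sg q) then 1 else 0)" by (rule card_filter_sum) simp
    finally show ?thesis .
  qed
  have "real (\<Sum>q<Q. card (M (sg q))) = (\<Sum>q<Q. real (card (M (sg q))))" by simp
  also have "\<dots> = (\<Sum>q<Q. \<Sum>n<N. if n \<in> M (sg q) then 1 else 0)"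
    by (rule sum.cong[OF refl]) (use each in auto)
  also have "\<dots> = (\<Sum>n<N. \<Sum>q<Q. if n \<in> M (sg q) then 1 else 0)"
    by (rule sum.swap)
  also have "\<dots> = (\<Sum>n<N. real (s n))"
  proof (rule sum.cong[OF refl])
    fix n
    show "(\<Sum>q<Q. if n \<in> M (sg q) then 1 else 0) = real (s n)"
      unfolding sn_def by (rule card_filter_sum[symmetric]) simp
  qed
  finally show ?thesis .
qed

lemma p_bound: "(\<Sum>n<N. real (s n)) \<le> real Q * real MaxM"
proof -
  have "(\<Sum>q<Q. card (M (sg q))) \<le> (\<Sum>q<Q. MaxM)"
    by (rule sum_mono) (use MaxM_ge sigf_props(1)[OF ao] in auto)
  also have "(\<Sum>q<Q. MaxM) = Q * MaxM" by simp
  finally have "real (\<Sum>q<Q. card (M (sg q))) \<le> real (Q * MaxM)" by (rule of_nat_mono)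
  then have "real (\<Sum>q<Q. card (M (sg q))) \<le> real Q * real MaxM" by simp
  then show ?thesis using sum_s by simp
qed

lemma s_le: "s n \<le> Q"
proof -
  have "s n \<le> card {..<Q}" unfolding sn_def by (rule card_mono) auto
  then show ?thesis by simp
qed

lemma bits_bound:
  assumes v: "valid_shuffle Q N T K M W l psi D"
  shows "real T * (\<Sum>n<N. gfun Q (s n)) \<le> real (\<Sum>k<K. l k)"
proof -
  interpret VS Q N T K M W l psi D using v ao by unfold_locales
  have "Gsum (\<lambda>q. M (sig q)) N {} {..<Q} = (\<Sum>n<N. gfun Q (s n))"
    unfolding Gsum_def sn_def by simp
  then show ?thesis using LB_bits by simp
qed

lemma cost_sum:
  "(\<Sum>n<N. cost_r cm cs Q (s n)) = cm * (\<Sum>n<N. real (s n)) / real Q + cs * (\<Sum>n<N. gfun Q (s n)) / real Q"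
proof -
  have "cost_r cm cs Q (s n) = cm * real (s n) / real Q + cs * gfun Q (s n) / real Q" for n
    unfolding cost_r_def gfun_def using Q1 by (simp add: field_simps)
  then show ?thesis by (simp add: sum.distrib sum_divide_distrib sum_distrib_left)
qed

definition c_opt where "c_opt = cost_r cm cs Q rs"

lemma cost_ge: "c_opt \<le> cost_r cm cs Q (s n)"
  unfolding c_opt_def using rstar_props(2)[OF Q1] s_le by blast

lemma main_bounds:
  obtains l psi D where "valid_shuffle Q N T K M W l psi D"
    "min_load Q N T K M W = real (\<Sum>k<K. l k) / real (Q * N * T)"
    "cm * ((\<Sum>n<N. real (s n)) / (real Q * real N)) \<le> cm * (real MaxM / real N)"
    "cs * ((\<Sum>n<N. gfun Q (s n)) / (real Q * real N)) \<le> cs * min_load Q N T K M W"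
    "cm * ((\<Sum>n<N. real (s n)) / (real Q * real N)) + cs * ((\<Sum>n<N. gfun Q (s n)) / (real Q * real N))
       = (\<Sum>n<N. cost_r cm cs Q (s n)) / real N"
    "c_opt \<le> (\<Sum>n<N. cost_r cm cs Q (s n)) / real N"
    "T_seq cm cs cr Q T N K M W = cm * (real MaxM / real N) + cs * min_load Q N T K M W + cr * real MaxW"
proof -
  obtain l psi D where v: "valid_shuffle Q N T K M W l psi D"
    and ml: "min_load Q N T K M W = real (\<Sum>k<K. l k) / real (Q * N * T)"
    using min_load_attained[OF ao, of T] by metis
  have Npos: "real N > 0" "real Q > 0" "real T > 0" using N1 Q1 T1 by auto
  have a: "(\<Sum>n<N. real (s n)) / (real Q * real N) \<le> real MaxM / real N"
  proof -
    have "(\<Sum>n<N. real (s n)) / (real Q * real N) \<le> (real Q * real MaxM) / (real Q * real N)"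
      by (rule divide_right_mono[OF p_bound]) (use Npos in simp)
    also have "\<dots> = real MaxM / real N" using Npos by simp
    finally show ?thesis .
  qed
  have b: "(\<Sum>n<N. gfun Q (s n)) / (real Q * real N) \<le> min_load Q N T K M W"
  proof -
    have "(\<Sum>n<N. gfun Q (s n)) / (real Q * real N) = real T * (\<Sum>n<N. gfun Q (s n)) / real (Q * N * T)"
      using Npos by (simp add: field_simps)
    also have "\<dots> \<le> real (\<Sum>k<K. l k) / real (Q * N * T)"
      by (rule divide_right_mono[OF bits_bound[OF v]]) simp
    finally show ?thesis using ml by simp
  qed
  have e: "cm * ((\<Sum>n<N. real (s n)) / (real Q * real N)) + cs * ((\<Sum>n<N. gfun Q (s n)) / (real Q * real N))
       = (\<Sum>n<N. cost_r cm cs Q (s n)) / real N"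
    unfolding cost_sum using Npos by (simp add: field_simps)
  have f: "c_opt \<le> (\<Sum>n<N. cost_r cm cs Q (s n)) / real N"
  proof -
    have "(\<Sum>n<N. c_opt) \<le> (\<Sum>n<N. cost_r cm cs Q (s n))" by (rule sum_mono) (rule cost_ge)
    then have "real N * c_opt \<le> (\<Sum>n<N. cost_r cm cs Q (s n))" by simp
    then show ?thesis using Npos by (simp add: field_simps)
  qed
  show ?thesis
    by (rule that[OF v ml mult_left_mono[OF a] mult_left_mono[OF b] e f])
       (use cm cs in \<open>auto simp: T_seq_def\<close>)
qed

lemma T_lower: "c_opt + cr * real MaxW \<le> T_seq cm cs cr Q T N K M W"
proof -
  obtain l psi D where
    "cm * ((\<Sum>n<N. real (s n)) / (real Q * real N)) \<le> cm * (real MaxM / real N)"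
    "cs * ((\<Sum>n<N. gfun Q (s n)) / (real Q * real N)) \<le> cs * min_load Q N T K M W"
    "cm * ((\<Sum>n<N. real (s n)) / (real Q * real N)) + cs * ((\<Sum>n<N. gfun Q (s n)) / (real Q * real N))
       = (\<Sum>n<N. cost_r cm cs Q (s n)) / real N"
    "c_opt \<le> (\<Sum>n<N. cost_r cm cs Q (s n)) / real N"
    "T_seq cm cs cr Q T N K M W = cm * (real MaxM / real N) + cs * min_load Q N T K M W + cr * real MaxW"
    using main_bounds by metis
  then show ?thesis by linarith
qed

end

context CFG
begin

lemma Gsum_eq: "Gsum (\<lambda>q. M (sg q)) N {} {..<Q} = (\<Sum>n<N. gfun Q (s n))"
  unfolding Gsum_def sn_def by simp

lemma tight:
  assumes eq: "T_seq cm cs cr Q T N K M W = c_opt + cr"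
  shows "MaxW = 1" "\<forall>n<N. s n \<le> rs" "real MaxM * real Q \<le> real rs * real N"
    "\<exists>l psi D. valid_shuffle Q N T K M W l psi D \<and> (\<forall>q<Q. l (sg q) = 0)"
proof -
  obtain l psi D where v: "valid_shuffle Q N T K M W l psi D"
    and ml: "min_load Q N T K M W = real (\<Sum>k<K. l k) / real (Q * N * T)"
    and a: "cm * ((\<Sum>n<N. real (s n)) / (real Q * real N)) \<le> cm * (real MaxM / real N)"
    and b: "cs * ((\<Sum>n<N. gfun Q (s n)) / (real Q * real N)) \<le> cs * min_load Q N T K M W"
    and e: "cm * ((\<Sum>n<N. real (s n)) / (real Q * real N)) + cs * ((\<Sum>n<N. gfun Q (s n)) / (real Q * real N))
       = (\<Sum>n<N. cost_r cm cs Q (s n)) / real N"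
    and f: "c_opt \<le> (\<Sum>n<N. cost_r cm cs Q (s n)) / real N"
    and Td: "T_seq cm cs cr Q T N K M W = cm * (real MaxM / real N) + cs * min_load Q N T K M W + cr * real MaxW"
    using main_bounds by metis
  have W1: "1 \<le> real MaxW" using MaxW_ge1 by simp
  have cW: "cr * 1 \<le> cr * real MaxW" by (rule mult_left_mono[OF W1]) (use cr in simp)
  have t1: "cm * ((\<Sum>n<N. real (s n)) / (real Q * real N)) = cm * (real MaxM / real N)"
    using a b e f Td eq cW by linarith
  have t2: "cs * ((\<Sum>n<N. gfun Q (s n)) / (real Q * real N)) = cs * min_load Q N T K M W"
    using a b e f Td eq cW by linarith
  have t3: "(\<Sum>n<N. cost_r cm cs Q (s n)) / real N = c_opt"
    using a b e f Td eq cW by linarith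
  have t4: "cr * real MaxW = cr * 1"
    using a b e f Td eq cW by linarith
  have Npos: "real N > 0" "real Q > 0" "real T > 0" using N1 Q1 T1 by auto
  show "MaxW = 1" using t4 cr by simp
  have pA: "(\<Sum>n<N. real (s n)) / (real Q * real N) = real MaxM / real N"
    by (rule mult_left_cancel[THEN iffD1, OF _ t1]) (use cm in simp)
  have gA: "(\<Sum>n<N. gfun Q (s n)) / (real Q * real N) = min_load Q N T K M W"
    by (rule mult_left_cancel[THEN iffD1, OF _ t2]) (use cs in simp)
  have sumc: "(\<Sum>n<N. cost_r cm cs Q (s n) - c_opt) = 0"
  proof -
    have "(\<Sum>n<N. cost_r cm cs Q (s n)) = real N * c_opt" using t3 Npos by (simp add: field_simps)
    then show ?thesis by (simp add: sum_subtractf)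
  qed
  have eachc: "cost_r cm cs Q (s n) = c_opt" if n: "n < N" for n
  proof -
    have "\<forall>i\<in>{..<N}. cost_r cm cs Q (s i) - c_opt = 0"
      using sum_nonneg_eq_0_iff[of "{..<N}" "\<lambda>i. cost_r cm cs Q (s i) - c_opt"] sumc cost_ge by simp
    then show ?thesis using n by simp
  qed
  show sle: "\<forall>n<N. s n \<le> rs"
  proof (intro allI impI)
    fix n assume n: "n < N"
    show "s n \<le> rs"
    proof (rule rstar_props(3)[OF Q1 s_le])
      show "\<forall>r'\<le>Q. cost_r cm cs Q (s n) \<le> cost_r cm cs Q r'"
        using eachc[OF n] rstar_props(2)[OF Q1] unfolding c_opt_def by simp
    qed
  qed
  have "real MaxM * real Q = (\<Sum>n<N. real (s n))" using pA Npos by (simp add: field_simps)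
  also have "\<dots> \<le> (\<Sum>n<N. real rs)" by (rule sum_mono) (use sle in auto)
  also have "\<dots> = real rs * real N" by simp
  finally show "real MaxM * real Q \<le> real rs * real N" .
  have "real (\<Sum>k<K. l k) = real T * (\<Sum>n<N. gfun Q (s n))"
    using gA ml Npos by (simp add: field_simps)
  then have "real (\<Sum>k<K. l k) \<le> real T * Gsum (\<lambda>q. M (sg q)) N {} {..<Q}" using Gsum_eq by simp
  then have "\<forall>q<Q. l (sg q) = 0"
  proof -
    assume h: "real (\<Sum>k<K. l k) \<le> real T * Gsum (\<lambda>q. M (sg q)) N {} {..<Q}"
    interpret VS Q N T K M W l psi D using v ao by unfold_locales
    show ?thesis by (rule silent[OF h])
  qed
  then show "\<exists>l psi D. valid_shuffle Q N T K M W l psi D \<and> (\<forall>q<Q. l (sg q) = 0)" using v by blast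
qed

lemma tight_K:
  assumes eq: "T_seq cm cs cr Q T N K M W = c_opt + cr"
  shows "rs \<noteq> 0" "Q \<le> K" "rs < Q \<Longrightarrow> int Q + \<lceil>real Q / real rs\<rceil> \<le> int K"
proof -
  note tt = tight[OF eq]
  have Npos: "real N > 0" "real Q > 0" using N1 Q1 by auto
  show rs0: "rs \<noteq> 0"
  proof
    assume r0: "rs = 0"
    obtain k where k: "k < K" "0 \<in> M k" using ao_cover[OF ao, of 0] N1 by auto
    have "finite (M k)" using ao_M[OF ao k(1)] finite_subset by blast
    then have "1 \<le> card (M k)" using k(2) by (metis One_nat_def Suc_leI card_gt_0_iff empty_iff)
    also have "\<dots> \<le> MaxM" by (rule MaxM_ge[OF k(1)])
    finally have "1 \<le> real MaxM" by simp
    then have h1: "real Q \<le> real MaxM * real Q" using Npos by simp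
    have h2: "real MaxM * real Q \<le> 0" using tt(3) r0 by simp
    show False using h1 h2 Npos by linarith
  qed
  have Wle: "card (W k) \<le> 1" if "k < K" for k using MaxW_ge[OF that] tt(1) by simp
  have inj: "inj_on sg {..<Q}"
  proof (rule inj_onI)
    fix q q' assume q: "q \<in> {..<Q}" and q': "q' \<in> {..<Q}" and e: "sg q = sg q'"
    have k: "sg q < K" using sigf_props(1)[OF ao] q by auto
    have fin: "finite (W (sg q))" using ao_W[OF ao k] finite_subset by blast
    have "q \<in> W (sg q)" using sigf_props(2)[OF ao] q by simp
    moreover have "q' \<in> W (sg q)" unfolding e using sigf_props(2)[OF ao] q' by simp
    ultimately show "q = q'" using Wle[OF k] fin by (metis card_le_Suc0_iff_eq One_nat_def)
  qed
  have imgK: "sg ` {..<Q} \<subseteq> {..<K}" using sigf_props(1)[OF ao] by auto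
  have cimg: "card (sg ` {..<Q}) = Q" using card_image[OF inj] by simp
  show "Q \<le> K" using card_mono[OF _ imgK] cimg by simp
  assume rQ: "rs < Q"
  define H where "H = {..<K} - sg ` {..<Q}"
  obtain l psi D where v: "valid_shuffle Q N T K M W l psi D" and sil: "\<forall>q<Q. l (sg q) = 0"
    using tt(4) by blast
  interpret VS Q N T K M W l psi D using v ao by unfold_locales
  have cov: "{..<N} \<subseteq> (\<Union>j\<in>H. M j)"
  proof
    fix n assume "n \<in> {..<N}"
    then have n: "n < N" by simp
    have "\<exists>q<Q. n \<notin> M (sg q)"
    proof (rule ccontr)
      assume "\<not> (\<exists>q<Q. n \<notin> M (sg q))"
      then have "{q \<in> {..<Q}. n \<in> M (sg q)} = {..<Q}" by auto
      then have "s n = Q" unfolding sn_def by simp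
      then show False using tt(2) n rQ by auto
    qed
    then obtain q where q: "q < Q" "n \<notin> M (sg q)" by blast
    obtain j where "j < K" "j \<notin> sg ` {..<Q}" "n \<in> M j"
      using helper_exists[OF sil T1 n q] by blast
    then show "n \<in> (\<Union>j\<in>H. M j)" unfolding H_def by auto
  qed
  have finH: "finite H" unfolding H_def by simp
  have "N \<le> card (\<Union>j\<in>H. M j)"
    using card_mono[OF _ cov] finH ao_M[OF ao] unfolding H_def
    by (metis (no_types, lifting) DiffD1 card_lessThan finite_UN_I finite_lessThan finite_subset lessThan_iff)
  also have "\<dots> \<le> (\<Sum>j\<in>H. card (M j))" by (rule card_UN_le[OF finH])
  also have "\<dots> \<le> (\<Sum>j\<in>H. MaxM)" by (rule sum_mono) (use MaxM_ge in \<open>auto simp: H_def\<close>)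
  also have "\<dots> = card H * MaxM" by simp
  finally have "real N \<le> real (card H) * real MaxM" by (metis of_nat_le_iff of_nat_mult)
  then have "real N * real Q \<le> real (card H) * (real MaxM * real Q)"
    using Npos by (simp add: mult_right_mono mult.assoc)
  also have "\<dots> \<le> real (card H) * (real rs * real N)" by (rule mult_left_mono[OF tt(3)]) simp
  finally have "real Q * real N \<le> (real (card H) * real rs) * real N" by (simp add: algebra_simps)
  then have QH: "real Q \<le> real (card H) * real rs" using Npos by simp
  have rpos: "real rs > 0" using rs0 by simp
  have "real Q / real rs \<le> real (card H)" using QH rpos by (simp add: divide_le_eq)
  then have "\<lceil>real Q / real rs\<rceil> \<le> int (card H)" by (simp add: ceiling_le_iff)
  moreover have "K = Q + card H"
  proof -
    have "{..<K} = sg ` {..<Q} \<union> H" unfolding H_def using imgK by auto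
    moreover have "sg ` {..<Q} \<inter> H = {}" unfolding H_def by auto
    ultimately have "card {..<K} = card (sg ` {..<Q}) + card H"
      using finH by (metis card_Un_disjoint finite_imageI finite_lessThan)
    then show ?thesis using cimg by simp
  qed
  ultimately show "int Q + \<lceil>real Q / real rs\<rceil> \<le> int K" by simp
qed

end

lemma parity_single:
  assumes fU: "finite U" and k: "k \<in> U" and eqo: "\<forall>x\<in>U-{k}. P x = P' x"
    and par: "odd (card {x\<in>U. P x}) = odd (card {x\<in>U. P' x})"
  shows "P k = P' k"
proof -
  have c: "card {x\<in>U. R x} = card {x\<in>U-{k}. R x} + (if R k then 1 else 0)" for R
  proof (cases "R k")
    case True
    then have "{x\<in>U. R x} = insert k {x\<in>U-{k}. R x}" using k by auto
    moreover have "finite {x\<in>U-{k}. R x}" using fU by simp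
    ultimately show ?thesis using True by simp
  next
    case False
    then have "{x\<in>U. R x} = {x\<in>U-{k}. R x}" by auto
    then show ?thesis using False by simp
  qed
  have e: "{x\<in>U-{k}. P x} = {x\<in>U-{k}. P' x}" using eqo by auto
  show ?thesis using par c[of P] c[of P'] e by (cases "P k"; cases "P' k") auto
qed

lemma card_sub_containing:
  assumes kQ: "k < Q" and r1: "1 \<le> r"
  shows "card {S. S \<subseteq> {..<Q} \<and> card S = r \<and> k \<in> S} = (Q - 1) choose (r - 1)"
proof -
  define A where "A = {S. S \<subseteq> {..<Q} - {k} \<and> card S = r - 1}"
  have eq: "{S. S \<subseteq> {..<Q} \<and> card S = r \<and> k \<in> S} = insert k ` A"
  proof
    show "{S. S \<subseteq> {..<Q} \<and> card S = r \<and> k \<in> S} \<subseteq> insert k ` A"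
    proof
      fix S assume S: "S \<in> {S. S \<subseteq> {..<Q} \<and> card S = r \<and> k \<in> S}"
      then have fS: "finite S" using finite_subset by blast
      have "S - {k} \<in> A" unfolding A_def using S fS by auto
      moreover have "S = insert k (S - {k})" using S by auto
      ultimately show "S \<in> insert k ` A" by blast
    qed
    show "insert k ` A \<subseteq> {S. S \<subseteq> {..<Q} \<and> card S = r \<and> k \<in> S}"
    proof
      fix S assume "S \<in> insert k ` A"
      then obtain S' where S': "S' \<in> A" "S = insert k S'" by blast
      have fS': "finite S'" using S'(1) unfolding A_def using finite_subset by blast
      have "k \<notin> S'" using S'(1) unfolding A_def by auto
      then have "card S = Suc (r - 1)" using S' fS' unfolding A_def by simp
      then show "S \<in> {S. S \<subseteq> {..<Q} \<and> card S = r \<and> k \<in> S}" using S' kQ r1 unfolding A_def by auto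
    qed
  qed
  have inj: "inj_on (insert k) A"
  proof (rule inj_onI)
    fix X Y assume "X \<in> A" "Y \<in> A" "insert k X = insert k Y"
    moreover have "k \<notin> X" "k \<notin> Y" using calculation unfolding A_def by auto
    ultimately show "X = Y" by (metis Diff_insert_absorb)
  qed
  have "card A = card ({..<Q} - {k}) choose (r - 1)" unfolding A_def by (rule n_subsets) simp
  also have "card ({..<Q} - {k}) = Q - 1" using kQ by simp
  finally show ?thesis unfolding eq using card_image[OF inj] by simp
qed

lemma binom_id1: "0 < r \<Longrightarrow> r * (Q choose r) = Q * ((Q - 1) choose (r - 1))"
  by (rule times_binomial_minus1_eq)

lemma binom_id2: "Suc r * (Q choose Suc r) = (Q - r) * (Q choose r)"
proof -
  have "Suc r * (Q choose Suc r) = Q * ((Q - 1) choose r)"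
    using times_binomial_minus1_eq[of "Suc r" Q] by simp
  also have "\<dots> = (Q - r) * (Q choose r)" using binomial_absorb_comp[of Q r] by simp
  finally show ?thesis .
qed

lemma T_seq_le:
  assumes ao: "assignment_ok Q N K M W" and N1: "N \<ge> 1" and Q1: "Q \<ge> 1" and T1: "T \<ge> 1"
    and v: "valid_shuffle Q N T K M W l psi D" and K0: "K > 0"
    and pM: "\<And>k. k < K \<Longrightarrow> real (card (M k)) \<le> p * real N"
    and W1: "\<And>k. k < K \<Longrightarrow> card (W k) \<le> 1"
    and Lb: "real (\<Sum>k<K. l k) \<le> Lv * real (Q * N * T)"
    and cm: "cm \<ge> 0" and cs: "cs \<ge> 0" and cr: "cr \<ge> 0"
  shows "T_seq cm cs cr Q T N K M W \<le> cm * p + cs * Lv + cr"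
proof -
  have Npos: "real N > 0" "real (Q * N * T) > 0" using N1 Q1 T1 by auto
  have ne: "(\<lambda>k. card (M k)) ` {..<K} \<noteq> {}" using K0 by auto
  have "Max ((\<lambda>k. card (M k)) ` {..<K}) \<in> (\<lambda>k. card (M k)) ` {..<K}" by (rule Max_in) (use ne in auto)
  then obtain k where k: "k < K" "Max ((\<lambda>k. card (M k)) ` {..<K}) = card (M k)" by auto
  have a: "real (Max ((\<lambda>k. card (M k)) ` {..<K})) / real N \<le> p"
    using pM[OF k(1)] k(2) Npos by (simp add: divide_le_eq)
  have "min_load Q N T K M W \<le> real (\<Sum>k<K. l k) / real (Q * N * T)" by (rule min_load_le[OF ao v])
  also have "\<dots> \<le> Lv" using Lb Npos by (simp add: divide_le_eq)
  finally have b: "min_load Q N T K M W \<le> Lv" .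
  have "Max ((\<lambda>k. card (W k)) ` {..<K}) \<le> 1" using W1 ne by (auto simp: Max_le_iff)
  then have c: "real (Max ((\<lambda>k. card (W k)) ` {..<K})) \<le> 1" by simp
  show ?thesis unfolding T_seq_def
    using mult_left_mono[OF a cm] mult_left_mono[OF b cs] mult_left_mono[OF c cr] by simp
qed

locale CODED =
  fixes Q r m T :: nat and f :: "nat \<times> nat set \<Rightarrow> nat" and Ulist :: "nat set list"
  assumes r1: "1 \<le> r" and rQ: "r < Q" and m1: "1 \<le> m" and Qm: "Q \<le> m * r" and T1: "T \<ge> 1"
    and fbij: "bij_betw f ({..<m} \<times> {S. S \<subseteq> {..<Q} \<and> card S = r}) {..<m * (Q choose r)}"
    and Ul: "distinct Ulist" "set Ulist = {S. S \<subseteq> {..<Q} \<and> card S = Suc r}"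
begin

abbreviation "Sub k \<equiv> {S. S \<subseteq> {..<Q} \<and> card S = k}"
abbreviation "Idx \<equiv> {..<m} \<times> Sub r"
abbreviation "NN \<equiv> m * (Q choose r)"
abbreviation "KK \<equiv> Q + m"

definition "Mc k = (if k < Q then f ` {x \<in> Idx. k \<in> snd x} else f ` ({k - Q} \<times> Sub r))"
definition "Wc k = (if k < Q then {k} else ({} :: nat set))"
definition "msg h U v = map (\<lambda>t. odd (card {k\<in>U. v k (f (h, U - {k})) ! t})) [0..<T]"
definition "psic k v = (if k < Q then [] else concat (map (\<lambda>U. msg (k - Q) U v) Ulist))"
definition "lc k = (if k < Q then 0 else length Ulist * T)"
definition "Dc k = {..<KK} - {k}"

lemma fimg: "f ` Idx = {..<NN}" using fbij by (simp add: bij_betw_def)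
lemma finj: "inj_on f Idx" using fbij by (simp add: bij_betw_def)

lemma NN1: "NN \<ge> 1"
proof -
  have "0 < Q choose r" by (rule zero_less_binomial) (use rQ in simp)
  moreover have "0 < m" using m1 by simp
  ultimately have "0 < NN" by simp
  then show ?thesis by linarith
qed

lemma Mc_sub: "k < KK \<Longrightarrow> Mc k \<subseteq> {..<NN}"
  unfolding Mc_def using fimg by (auto split: if_splits)

lemma ao_c: "assignment_ok Q NN KK Mc Wc"
  unfolding assignment_ok_def
proof (intro conjI allI impI)
  show "\<And>k. k < KK \<Longrightarrow> Mc k \<subseteq> {..<NN}" by (rule Mc_sub)
  show "(\<Union>k<KK. Mc k) = {..<NN}"
  proof
    show "(\<Union>k<KK. Mc k) \<subseteq> {..<NN}" using Mc_sub by blast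
    show "{..<NN} \<subseteq> (\<Union>k<KK. Mc k)"
    proof
      fix n assume "n \<in> {..<NN}"
      then obtain x where x: "x \<in> Idx" "n = f x" using fimg by blast
      obtain h S where hS: "x = (h, S)" by (cases x)
      have "n \<in> Mc (Q + h)" unfolding Mc_def using x hS by auto
      moreover have "Q + h < KK" using x hS by auto
      ultimately show "n \<in> (\<Union>k<KK. Mc k)" by blast
    qed
  qed
  show "\<And>k. k < KK \<Longrightarrow> Wc k \<subseteq> {..<Q}" unfolding Wc_def by auto
  show "(\<Union>k<KK. Wc k) = {..<Q}" unfolding Wc_def by (auto split: if_splits)
  show "\<And>k j. k < KK \<Longrightarrow> j < KK \<Longrightarrow> k \<noteq> j \<Longrightarrow> Wc k \<inter> Wc j = {}" unfolding Wc_def by auto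
qed

lemma msg_len: "length (msg h U v) = T" unfolding msg_def by simp

lemma psic_len: "length (psic k v) = lc k"
  unfolding psic_def lc_def
  by (simp add: length_concat msg_len map_replicate_const sum_list_replicate comp_def)

lemma sub_in_idx: "h < m \<Longrightarrow> U \<in> Sub (Suc r) \<Longrightarrow> k \<in> U \<Longrightarrow> (h, U - {k}) \<in> Idx"
proof -
  assume a: "h < m" "U \<in> Sub (Suc r)" "k \<in> U"
  have "finite U" using a(2) finite_subset by blast
  then show ?thesis using a by auto
qed

lemma valid_c: "valid_shuffle Q NN T KK Mc Wc lc psic Dc"
  unfolding valid_shuffle_def
proof (intro conjI allI impI)
  show "\<And>k. k < KK \<Longrightarrow> Dc k \<subseteq> {..<KK} - {k}" unfolding Dc_def by simp
  show "\<And>k v. k < KK \<Longrightarrow> realization Q NN T v \<Longrightarrow> length (psic k v) = lc k" by (rule psic_len)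
  show "psic k v = psic k v'"
    if k: "k < KK" and ag: "\<forall>q<Q. \<forall>n\<in>Mc k. v q n = v' q n" for k v v'
  proof (cases "k < Q")
    case True then show ?thesis unfolding psic_def by simp
  next
    case False
    define h where "h = k - Q"
    have h: "h < m" using k False unfolding h_def by simp
    have "msg h U v = msg h U v'" if U: "U \<in> set Ulist" for U
    proof -
      have "U \<in> Sub (Suc r)" using U Ul by simp
      then have "v k' (f (h, U - {k'})) = v' k' (f (h, U - {k'}))" if "k' \<in> U" for k'
      proof -
        have "(h, U - {k'}) \<in> Idx" using sub_in_idx[OF h \<open>U \<in> Sub (Suc r)\<close> that] .
        then have "f (h, U - {k'}) \<in> Mc k" unfolding Mc_def h_def using False by auto
        moreover have "k' < Q" using \<open>U \<in> Sub (Suc r)\<close> that by auto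
        ultimately show ?thesis using ag by blast
      qed
      then show ?thesis unfolding msg_def
        by (intro map_cong refl) (metis (no_types, lifting) mem_Collect_eq Collect_cong)
    qed
    then show ?thesis unfolding psic_def h_def using False by (simp cong: map_cong)
  qed
  show "\<forall>q\<in>Wc k. \<forall>n<NN. v q n = v' q n"
    if k: "k < KK" and rv: "realization Q NN T v" and rv': "realization Q NN T v'"
      and ag: "\<forall>q<Q. \<forall>n\<in>Mc k. v q n = v' q n"
      and ps: "\<forall>j<KK. k \<in> Dc j \<longrightarrow> psic j v = psic j v'" for k v v'
  proof (intro ballI allI impI)
    fix q n assume q: "q \<in> Wc k" and n: "n < NN"
    have kQ: "k < Q" and qk: "q = k" using q unfolding Wc_def by (auto split: if_splits)
    show "v q n = v' q n"
    proof (cases "n \<in> Mc k")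
      case True then show ?thesis using ag qk kQ by auto
    next
      case False
      have "n \<in> f ` Idx" using fimg n by simp
      then obtain x where x: "x \<in> Idx" "n = f x" by (rule imageE) simp
      obtain h S where hS: "x = (h, S)" by (cases x)
      have h: "h < m" and S: "S \<in> Sub r" using x hS by auto
      have kS: "k \<notin> S"
      proof
        assume "k \<in> S"
        then have "x \<in> {x \<in> Idx. k \<in> snd x}" using x hS by simp
        then have "n \<in> Mc k" unfolding Mc_def using kQ x(2) by simp
        then show False using False by simp
      qed
      define U where "U = insert k S"
      have fS: "finite S" using S finite_subset by blast
      have U: "U \<in> Sub (Suc r)" unfolding U_def using S kS kQ fS by auto
      have USk: "U - {k} = S" unfolding U_def using kS by auto
      have jK: "Q + h < KK" using h by simp
      have "k \<in> Dc (Q + h)" unfolding Dc_def using k kQ by auto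
      then have "psic (Q + h) v = psic (Q + h) v'" using ps jK by simp
      then have "concat (map (\<lambda>U. msg h U v) Ulist) = concat (map (\<lambda>U. msg h U v') Ulist)"
        unfolding psic_def by simp
      then have "map (\<lambda>U. msg h U v) Ulist = map (\<lambda>U. msg h U v') Ulist"
        by (rule concat_eq_sameD) (simp add: msg_len comp_def)
      moreover have "U \<in> set Ulist" using U Ul by simp
      ultimately have me: "msg h U v = msg h U v'" by (simp add: map_eq_conv)
      have bits: "v k n ! t = v' k n ! t" if t: "t < T" for t
      proof -
        have "\<forall>t\<in>set [0..<T]. odd (card {k'\<in>U. v k' (f (h, U - {k'})) ! t}) = odd (card {k'\<in>U. v' k' (f (h, U - {k'})) ! t})"
          using me unfolding msg_def map_eq_conv .
        then have p1: "odd (card {k'\<in>U. v k' (f (h, U - {k'})) ! t}) = odd (card {k'\<in>U. v' k' (f (h, U - {k'})) ! t})"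
          using t by simp
        have p2: "\<forall>k'\<in>U-{k}. (v k' (f (h, U - {k'})) ! t) = (v' k' (f (h, U - {k'})) ! t)"
        proof
          fix k' assume k': "k' \<in> U - {k}"
          have "(h, U - {k'}) \<in> Idx" using sub_in_idx[OF h U] k' by auto
          moreover have "k \<in> U - {k'}" using k' unfolding U_def by auto
          ultimately have "(h, U - {k'}) \<in> {x \<in> Idx. k \<in> snd x}" by simp
          then have "f (h, U - {k'}) \<in> Mc k" unfolding Mc_def using kQ by simp
          moreover have "k' < Q" using U k' by auto
          ultimately show "(v k' (f (h, U - {k'})) ! t) = (v' k' (f (h, U - {k'})) ! t)" using ag by simp
        qed
        have p3: "finite U" using U finite_subset by blast
        have p4: "k \<in> U" unfolding U_def by simp
        have "(v k (f (h, U - {k})) ! t) = (v' k (f (h, U - {k})) ! t)"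
          by (rule parity_single[of U k "\<lambda>k'. v k' (f (h, U - {k'})) ! t" "\<lambda>k'. v' k' (f (h, U - {k'})) ! t", OF p3 p4 p2 p1])
        then show ?thesis using USk x hS by simp
      qed
      have "length (v k n) = T" "length (v' k n) = T" using rv rv' kQ n unfolding realization_def by auto
      then have "v k n = v' k n" using bits by (intro nth_equalityI) auto
      then show ?thesis using qk by simp
    qed
  qed
qed

lemma card_Mc: assumes k: "k < KK" shows "Q * card (Mc k) \<le> r * NN"
proof (cases "k < Q")
  case True
  have "{x \<in> Idx. k \<in> snd x} = {..<m} \<times> {S. S \<subseteq> {..<Q} \<and> card S = r \<and> k \<in> S}" by auto
  then have "card {x \<in> Idx. k \<in> snd x} = m * ((Q - 1) choose (r - 1))"
    using card_sub_containing[OF True r1] by (simp add: card_cartesian_product)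
  moreover have "card (Mc k) = card {x \<in> Idx. k \<in> snd x}"
  proof -
    have "Mc k = f ` {x \<in> Idx. k \<in> snd x}" unfolding Mc_def using True by simp
    then show ?thesis by (simp add: card_image inj_on_subset[OF finj])
  qed
  ultimately have "Q * card (Mc k) = m * (Q * ((Q - 1) choose (r - 1)))" by simp
  also have "\<dots> = m * (r * (Q choose r))" using binom_id1[of r Q] r1 by simp
  finally show ?thesis by simp
next
  case False
  have "Mc k = f ` ({k - Q} \<times> Sub r)" unfolding Mc_def using False by simp
  moreover have "{k - Q} \<times> Sub r \<subseteq> Idx" using False k by auto
  ultimately have "card (Mc k) = card ({k - Q} \<times> Sub r)"
    by (simp add: card_image inj_on_subset[OF finj])
  also have "\<dots> = Q choose r" by (simp add: card_cartesian_product n_subsets)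
  finally have "Q * card (Mc k) = Q * (Q choose r)" by simp
  also have "\<dots> \<le> (m * r) * (Q choose r)" using Qm by simp
  finally show ?thesis by (simp add: ac_simps)
qed

lemma sum_lc: "(\<Sum>k<KK. lc k) = m * ((Q choose Suc r) * T)"
proof -
  have len: "length Ulist = Q choose Suc r"
    using distinct_card[OF Ul(1)] Ul(2) by (simp add: n_subsets)
  have "(\<Sum>k<Q + j. lc k) = j * (length Ulist * T)" for j
    by (induction j) (auto simp: lc_def)
  then show ?thesis using len by simp
qed

lemma coded_T:
  assumes cm: "cm \<ge> 0" and cs: "cs \<ge> 0" and cr: "cr \<ge> 0"
  shows "T_seq cm cs cr Q T NN KK Mc Wc \<le> cost_r cm cs Q r + cr"
proof -
  have Qpos: "real Q > 0" using rQ by simp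
  have "T_seq cm cs cr Q T NN KK Mc Wc \<le> cm * (real r / real Q) + cs * ((real Q - real r) / (real Q * (real r + 1))) + cr"
  proof (rule T_seq_le[OF ao_c NN1 _ T1 valid_c])
    show "1 \<le> Q" using rQ by simp
    show "0 < KK" using rQ by simp
    show "real (card (Mc k)) \<le> real r / real Q * real NN" if "k < KK" for k
    proof -
      have "real Q * real (card (Mc k)) \<le> real r * real NN"
        using card_Mc[OF that] by (metis of_nat_le_iff of_nat_mult)
      then show ?thesis using Qpos by (simp add: field_simps)
    qed
    show "card (Wc k) \<le> 1" for k unfolding Wc_def by simp
    show "real (\<Sum>k<KK. lc k) \<le> (real Q - real r) / (real Q * (real r + 1)) * real (Q * NN * T)"
    proof -
      have id: "real (Suc r) * real (Q choose Suc r) = (real Q - real r) * real (Q choose r)"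
        using binom_id2[of r Q] rQ by (metis of_nat_diff less_imp_le of_nat_mult)
      have id': "(real Q - real r) * real (Q choose r) = real (Suc r) * real (Q choose Suc r)"
        using id by (rule sym)
      have gen: "a / (real Q * b) * (real Q * c) = a * c / b" for a b c :: real
        using Qpos by (simp add: field_simps)
      have e1: "real (Q * NN * T) = real Q * (real (Q choose r) * (real m * real T))" by (simp add: ac_simps)
      have "(real Q - real r) / (real Q * (real r + 1)) * real (Q * NN * T)
          = (real Q - real r) * (real (Q choose r) * (real m * real T)) / (real r + 1)"
        unfolding e1 by (rule gen)
      also have "\<dots> = ((real Q - real r) * real (Q choose r)) * (real m * real T) / (real r + 1)"
        by (simp only: mult.assoc)
      also have "\<dots> = (real (Suc r) * real (Q choose Suc r)) * (real m * real T) / (real r + 1)"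
        by (simp only: id')
      also have "\<dots> = real (Q choose Suc r) * (real m * real T)"
      proof -
        have "real (Suc r) = real r + 1" "real r + 1 \<noteq> 0" by simp_all
        then show ?thesis by (simp only:) (simp add: field_simps)
      qed
      also have "\<dots> = real (\<Sum>k<KK. lc k)" unfolding sum_lc by simp
      finally show ?thesis by simp
    qed
  qed (use cm cs cr in auto)
  also have "\<dots> = cost_r cm cs Q r + cr" unfolding cost_r_def by simp
  finally show ?thesis .
qed

end

lemma config_Q:
  assumes Q1: "Q \<ge> 1" and T1: "T \<ge> 1" and cm: "cm \<ge> 0" and cs: "cs \<ge> 0" and cr: "cr \<ge> 0"
  shows "assignment_ok Q 1 Q (\<lambda>k. {0}) (\<lambda>k. if k < Q then {k} else {})
    \<and> T_seq cm cs cr Q T 1 Q (\<lambda>k. {0}) (\<lambda>k. if k < Q then {k} else {}) \<le> cost_r cm cs Q Q + cr"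
proof
  let ?M = "\<lambda>k::nat. {0::nat}" and ?W = "\<lambda>k::nat. if k < Q then {k} else ({} :: nat set)"
  have "0 \<in> {..<Q}" using Q1 by simp
  then have ne: "{..<Q} \<noteq> {}" by blast
  have U1: "(\<Union>k<Q. ?M k) = {..<1}"
  proof -
    have "(\<Union>k<Q. ?M k) = {0}" using ne by simp
    also have "{0} = {..<1::nat}" by auto
    finally show ?thesis .
  qed
  have U2: "(\<Union>k<Q. ?W k) = {..<Q}"
  proof -
    have "(\<Union>k<Q. ?W k) = (\<Union>k<Q. {k})" by (rule SUP_cong) auto
    also have "\<dots> = {..<Q}" by auto
    finally show ?thesis .
  qed
  have c1: "\<forall>k<Q. ?M k \<subseteq> {..<1}" by simp
  have c2: "\<forall>k<Q. ?W k \<subseteq> {..<Q}" by simp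
  have c3: "\<forall>k<Q. \<forall>j<Q. k \<noteq> j \<longrightarrow> ?W k \<inter> ?W j = {}" by simp
  show ao: "assignment_ok Q 1 Q ?M ?W" unfolding assignment_ok_def using U1 U2 c1 c2 c3 by blast
  have dec: "\<forall>q\<in>?W k. \<forall>n<1. v q n = v' q n" if k: "k < Q" and ag: "\<forall>q<Q. \<forall>n\<in>{0}. v q n = v' q n" for k and v v' :: ivals
  proof (intro ballI allI impI)
    fix q n assume q: "q \<in> ?W k" and n: "n < (1::nat)"
    have "q < Q" "n = 0" using q n k by (auto split: if_splits)
    then show "v q n = v' q n" using ag by simp
  qed
  have v: "valid_shuffle Q 1 T Q ?M ?W (\<lambda>_. 0) (\<lambda>_ _. []) (\<lambda>j. {..<Q} - {j})"
    unfolding valid_shuffle_def using dec by simp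
  have "T_seq cm cs cr Q T 1 Q ?M ?W \<le> cm * 1 + cs * 0 + cr"
    by (rule T_seq_le[OF ao _ Q1 T1 v]) (use Q1 cm cs cr in auto)
  also have "\<dots> = cost_r cm cs Q Q + cr" unfolding cost_r_def using Q1 by simp
  finally show "T_seq cm cs cr Q T 1 Q ?M ?W \<le> cost_r cm cs Q Q + cr" .
qed

lemma config_0:
  assumes N1: "N \<ge> 1" and Q1: "Q \<ge> 1" and T1: "T \<ge> 1" and cm: "cm \<ge> 0" and cs: "cs \<ge> 0" and cr: "cr \<ge> 0"
  shows "\<exists>K M W. assignment_ok Q N K M W \<and> T_seq cm cs cr Q T N K M W \<le> cm / real N + cs + cr"
proof -
  define M :: "nat \<Rightarrow> nat set" where "M k = (if k < Q then {} else {k - Q})" for k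
  define W :: "nat \<Rightarrow> nat set" where "W k = (if k < Q then {k} else {})" for k
  have U1: "(\<Union>k<Q + N. M k) = {..<N}"
  proof
    show "(\<Union>k<Q + N. M k) \<subseteq> {..<N}" unfolding M_def by auto
    show "{..<N} \<subseteq> (\<Union>k<Q + N. M k)"
    proof
      fix n assume "n \<in> {..<N}"
      then have "n \<in> M (Q + n)" "Q + n < Q + N" unfolding M_def by auto
      then show "n \<in> (\<Union>k<Q + N. M k)" by blast
    qed
  qed
  have U2: "(\<Union>k<Q + N. W k) = {..<Q}" unfolding W_def by (auto split: if_splits)
  have ao: "assignment_ok Q N (Q + N) M W"
    unfolding assignment_ok_def using U1 U2 by (auto simp: M_def W_def)
  have v: "valid_shuffle Q N T (Q + N) M W (\<lambda>j. card (M j) * (Q * T)) (unc_psi Q M) (\<lambda>j. {..<Q + N} - {j})"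
    by (rule unc_valid[OF ao])
  have sm: "(\<Sum>j<Q + i. card (M j) * (Q * T)) = i * (Q * T)" for i
    by (induction i) (auto simp: M_def)
  have "T_seq cm cs cr Q T N (Q + N) M W \<le> cm * (1 / real N) + cs * 1 + cr"
  proof (rule T_seq_le[OF ao N1 Q1 T1 v])
    show "real (card (M k)) \<le> 1 / real N * real N" for k using N1 by (simp add: M_def)
    show "card (W k) \<le> 1" for k by (simp add: W_def)
    show "real (\<Sum>k<Q + N. card (M k) * (Q * T)) \<le> 1 * real (Q * N * T)"
      unfolding sm by (simp add: ac_simps)
  qed (use Q1 cm cs cr in auto)
  then show ?thesis using ao by (intro exI[of _ "Q + N"] exI[of _ M] exI[of _ W]) simp
qed

lemma config_coded:
  assumes r1: "1 \<le> r" and rQ: "r < Q" and T1: "T \<ge> 1" and cm: "cm \<ge> 0" and cs: "cs \<ge> 0" and cr: "cr \<ge> 0"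
  shows "\<exists>N M W. N \<ge> 1 \<and> assignment_ok Q N (Q + nat \<lceil>real Q / real r\<rceil>) M W
     \<and> T_seq cm cs cr Q T N (Q + nat \<lceil>real Q / real r\<rceil>) M W \<le> cost_r cm cs Q r + cr"
proof -
  define m where "m = nat \<lceil>real Q / real r\<rceil>"
  have rpos: "real r > 0" using r1 by simp
  have "0 \<le> real Q / real r" by simp
  then have "-1 < real Q / real r" by linarith
  then have c0: "0 \<le> \<lceil>real Q / real r\<rceil>" by simp
  have "real m = real_of_int \<lceil>real Q / real r\<rceil>" unfolding m_def using c0 by simp
  then have ge: "real Q / real r \<le> real m" by simp
  have Qm: "Q \<le> m * r"
  proof -
    have "real Q \<le> real m * real r" using ge rpos by (simp add: divide_le_eq)
    then show ?thesis by (metis of_nat_le_iff of_nat_mult)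
  qed
  have m1: "1 \<le> m"
  proof (rule ccontr)
    assume "\<not> 1 \<le> m"
    then have "m = 0" by simp
    then show False using Qm rQ by simp
  qed
  define Idx where "Idx = {..<m} \<times> {S. S \<subseteq> {..<Q} \<and> card S = r}"
  have cI: "card Idx = m * (Q choose r)"
    unfolding Idx_def by (simp add: card_cartesian_product n_subsets)
  have fI: "finite Idx" unfolding Idx_def by simp
  obtain f where f: "bij_betw f Idx {0..<card Idx}" using ex_bij_betw_finite_nat[OF fI] by blast
  have fb: "bij_betw f ({..<m} \<times> {S. S \<subseteq> {..<Q} \<and> card S = r}) {..<m * (Q choose r)}"
    using f cI unfolding Idx_def by (simp add: atLeast0LessThan)
  have fU: "finite {S. S \<subseteq> {..<Q} \<and> card S = Suc r}" by simp
  obtain Ulist where Ul: "set Ulist = {S. S \<subseteq> {..<Q} \<and> card S = Suc r}" "distinct Ulist"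
    using finite_distinct_list[OF fU] by blast
  interpret CODED Q r m T f Ulist
    by unfold_locales (use r1 rQ m1 Qm T1 fb Ul in auto)
  show ?thesis
    using NN1 ao_c coded_T[OF cm cs cr] unfolding m_def by blast
qed

theorem theorem1:
  fixes cm cs cr :: real and Q T :: nat
  assumes "Q \<ge> 1" and "T \<ge> 1" and "cm > 0" and "cs > 0" and "cr > 0"
  shows "T_seq_opt cm cs cr Q T = cost_r cm cs Q (r_star cm cs Q) + cr
         \<and> ((\<exists>K. achieves_opt cm cs cr Q T K) \<longleftrightarrow> r_star cm cs Q \<noteq> 0)
         \<and> (r_star cm cs Q \<noteq> 0 \<longrightarrow>
             int (LEAST K. achieves_opt cm cs cr Q T K) =
             (if r_star cm cs Q < Q
              then int Q + \<lceil>real Q / real (r_star cm cs Q)\<rceil>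
              else int Q))"
proof -
  note Q1 = assms(1) and T1 = assms(2) and cm = assms(3) and cs = assms(4) and cr = assms(5)
  define rs where "rs = r_star cm cs Q"
  define copt where "copt = cost_r cm cs Q rs"
  define S where "S = {T_seq cm cs cr Q T N K M W | N K M W. N \<ge> 1 \<and> assignment_ok Q N K M W}"
  have Tdef: "T_seq_opt cm cs cr Q T = Inf S" unfolding T_seq_opt_def S_def ..
  have lowcfg: "copt + cr \<le> T_seq cm cs cr Q T N K M W"
    if N1: "N \<ge> 1" and ao: "assignment_ok Q N K M W" for N K M W
  proof -
    interpret CFG cm cs cr Q T N K M W by unfold_locales (use N1 ao Q1 T1 cm cs cr in auto)
    have a: "c_opt + cr * real MaxW \<le> T_seq cm cs cr Q T N K M W" by (rule T_lower)
    have "1 \<le> real MaxW" using MaxW_ge1 by simp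
    then have b: "cr * 1 \<le> cr * real MaxW" by (rule mult_left_mono) (use cr in simp)
    show ?thesis using a b unfolding c_opt_def copt_def rs_def by linarith
  qed
  have low: "\<forall>x\<in>S. copt + cr \<le> x" unfolding S_def using lowcfg by blast
  have bdd: "bdd_below S" using low unfolding bdd_below_def by blast
  have rsQ: "rs \<le> Q" using rstar_props(1)[OF Q1] unfolding rs_def .
  define Ks where "Ks = (if rs < Q then Q + nat \<lceil>real Q / real rs\<rceil> else Q)"
  have ach: "\<exists>N M W. N \<ge> 1 \<and> assignment_ok Q N Ks M W \<and> T_seq cm cs cr Q T N Ks M W \<le> copt + cr"
    if rs0: "rs \<noteq> 0"
  proof (cases "rs < Q")
    case True
    have "1 \<le> rs" using rs0 by simp
    from config_coded[OF this True T1, of cm cs cr] cm cs cr show ?thesis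
      unfolding Ks_def copt_def using True by simp
  next
    case False
    then have "rs = Q" using rsQ by simp
    then show ?thesis using config_Q[OF Q1 T1, of cm cs cr] cm cs cr unfolding Ks_def copt_def
      by (intro exI[of _ "1::nat"]) auto
  qed
  have opt: "T_seq_opt cm cs cr Q T = copt + cr"
  proof (cases "rs = 0")
    case False
    obtain N M W where c: "N \<ge> 1" "assignment_ok Q N Ks M W" "T_seq cm cs cr Q T N Ks M W \<le> copt + cr"
      using ach[OF False] by blast
    have inS: "T_seq cm cs cr Q T N Ks M W \<in> S" unfolding S_def using c by blast
    have eq: "T_seq cm cs cr Q T N Ks M W = copt + cr" using c(3) low inS by (meson antisym)
    show ?thesis unfolding Tdef
      by (rule cInf_eq_minimum) (use inS eq low in auto)
  next
    case True
    have c0: "copt = cs" unfolding copt_def True cost_r_def using Q1 by simp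
    have elem: "\<exists>x\<in>S. x \<le> cm / real N + cs + cr" if N1: "N \<ge> 1" for N
    proof -
      obtain K M W where "assignment_ok Q N K M W" "T_seq cm cs cr Q T N K M W \<le> cm / real N + cs + cr"
        using config_0[OF N1 Q1 T1, of cm cs cr] cm cs cr by auto
      then show ?thesis unfolding S_def using N1 by blast
    qed
    have ne: "S \<noteq> {}" using elem[of 1] by auto
    have ge: "copt + cr \<le> Inf S" by (rule cInf_greatest[OF ne]) (use low in auto)
    have le: "Inf S \<le> cm / real N + cs + cr" if N1: "N \<ge> 1" for N
    proof -
      obtain x where "x \<in> S" "x \<le> cm / real N + cs + cr" using elem[OF N1] by blast
      moreover have "Inf S \<le> x" by (rule cInf_lower[OF \<open>x \<in> S\<close> bdd])
      ultimately show ?thesis by linarith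
    qed
    have "Inf S \<le> copt + cr"
    proof (rule ccontr)
      assume "\<not> Inf S \<le> copt + cr"
      then have d: "Inf S - (cs + cr) > 0" using c0 by simp
      obtain n :: nat where n: "cm / (Inf S - (cs + cr)) < real n" using reals_Archimedean2 by blast
      have "0 < cm / (Inf S - (cs + cr))" using cm d by simp
      then have npos: "real n > 0" using n by linarith
      then have n1: "n \<ge> 1" by simp
      have "cm < real n * (Inf S - (cs + cr))" using n d by (simp add: divide_less_eq mult.commute)
      then have "cm / real n < Inf S - (cs + cr)" using npos by (simp add: divide_less_eq mult.commute)
      then show False using le[OF n1] by linarith
    qed
    then show ?thesis unfolding Tdef using ge by simp
  qed
  have tightK: "rs \<noteq> 0 \<and> Q \<le> K \<and> (rs < Q \<longrightarrow> int Q + \<lceil>real Q / real rs\<rceil> \<le> int K)"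
    if a: "achieves_opt cm cs cr Q T K" for K
  proof -
    obtain N M W where c: "N \<ge> 1" "assignment_ok Q N K M W" "T_seq cm cs cr Q T N K M W = T_seq_opt cm cs cr Q T"
      using a unfolding achieves_opt_def by blast
    interpret CFG cm cs cr Q T N K M W by unfold_locales (use c Q1 T1 cm cs cr in auto)
    have eq: "T_seq cm cs cr Q T N K M W = c_opt + cr" using c(3) opt unfolding c_opt_def copt_def rs_def by simp
    show ?thesis using tight_K[OF eq] unfolding rs_def by blast
  qed
  have achK: "achieves_opt cm cs cr Q T Ks" if rs0': "rs \<noteq> 0"
  proof -
    obtain N M W where c: "N \<ge> 1" "assignment_ok Q N Ks M W" "T_seq cm cs cr Q T N Ks M W \<le> copt + cr"
      using ach[OF rs0'] by blast
    have "copt + cr \<le> T_seq cm cs cr Q T N Ks M W" by (rule lowcfg[OF c(1,2)])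
    then have "T_seq cm cs cr Q T N Ks M W = T_seq_opt cm cs cr Q T" using c(3) opt by simp
    then show ?thesis unfolding achieves_opt_def using c by blast
  qed
  have iff: "(\<exists>K. achieves_opt cm cs cr Q T K) \<longleftrightarrow> rs \<noteq> 0"
    using tightK achK by blast
  have least: "int (LEAST K. achieves_opt cm cs cr Q T K) = (if rs < Q then int Q + \<lceil>real Q / real rs\<rceil> else int Q)"
    if rs0: "rs \<noteq> 0"
  proof -
    have cnn: "0 \<le> \<lceil>real Q / real rs\<rceil>"
    proof -
      have "0 \<le> real Q / real rs" by simp
      then have "-1 < real Q / real rs" by linarith
      then show ?thesis by simp
    qed
    have intKs: "int Ks = (if rs < Q then int Q + \<lceil>real Q / real rs\<rceil> else int Q)"
      unfolding Ks_def using cnn by simp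
    have "(LEAST K. achieves_opt cm cs cr Q T K) = Ks"
    proof (rule Least_equality)
      show "achieves_opt cm cs cr Q T Ks" by (rule achK[OF rs0])
      fix K assume "achieves_opt cm cs cr Q T K"
      then have t: "Q \<le> K" "rs < Q \<longrightarrow> int Q + \<lceil>real Q / real rs\<rceil> \<le> int K" using tightK by blast+
      have "int Ks \<le> int K" using t intKs by (cases "rs < Q") auto
      then show "Ks \<le> K" by simp
    qed
    then show ?thesis using intKs by simp
  qed
  show ?thesis using opt iff least unfolding rs_def copt_def by blast
qed

end
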